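(* Let $G$ be a finite abelian group, $K_1,K_2,K_3\leq G$ cyclic subgroups with $K_i\cap K_j=\{1\}$ for $i\neq j$, and for $i=1,2,3$ let $\psi_i:G\to\mathrm{Aut}(C_i)$ be an action of $G$ on a smooth projective curve $C_i$ of genus $\geq 2$ with $\ker\psi_i=K_i$ and $g(C_i/G)=1$, such that the diagonal action of $G$ on $C_1\times C_2\times C_3$ is free (i.e. $\Sigma_1\cap\Sigma_2\cap\Sigma_3=\{1\}$). For each $i$ fix a non-trivial element $\tilde\sigma_i\in G/K_i$ having a fixed point on $C_i$. Let $I(\tilde\sigma_1,\tilde\sigma_2,\tilde\sigma_3)=\{\chi_1\otimes\chi_2\otimes\chi_3\in I:\chi_i(\tilde\sigma_i)\neq1\text{ for } i=1,2,3\}$, let $G(\tilde\sigma_1,\tilde\sigma_2,\tilde\sigma_3)=\bigcap_{\psi\in I(\tilde\sigma_1,\tilde\sigma_2,\tilde\sigma_3)}\ker(\psi)\leq G\times G\times G$, and $\tilde G(\tilde\sigma_1,\tilde\sigma_2,\tilde\sigma_3)=G(\tilde\sigma_1,\tilde\sigma_2,\tilde\sigma_3)/K\Delta_G$, where $K=K_1\times K_2\times K_3$ and $\Delta_G$ is the diagonal of $G^3$. Then $\tilde G(\tilde\sigma_1,\tilde\sigma_2,\tilde\sigma_3)$ is either trivial or an elementary abelian $2$-group.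
   Context: $G^*$ denotes the group of characters (homomorphisms $G\to\mathbb{C}^*$). A character $\chi$ with $K_i\subseteq\ker\chi$ is viewed also as a character of $G/K_i$. $\Sigma_i=\{g\in G: g \text{ has a fixed point on } C_i\}$ (the union of the stabilizers of the $G$-action on $C_i$). A character $\chi\in G^*$ is pre-admissible for $i$ if $K_i\subseteq\ker\chi$ and $\chi(\sigma)\neq1$ for some $\sigma\in\Sigma_i$. For $\psi=\chi_1\otimes\chi_2\otimes\chi_3$ with $\chi_i\in G^*$, $\psi(\tau_1,\tau_2,\tau_3)=\chi_1(\tau_1)\chi_2(\tau_2)\chi_3(\tau_3)$ on $G^3$. $I_1$ is the set of $\chi_1\otimes\chi_2\otimes\chi_3$ with each $\chi_i$ pre-admissible for $i$ and $\chi_3=\overline{\chi_1\chi_2}$ (admissible of first kind); $I_2$ is the set of $\chi_1\otimes\chi_2\otimes\chi_3$ with exactly one $\chi_i$ trivial and the other two pre-admissible for their respective indices and complex conjugate to each other (admissible of second kind); $I=I_1\cup I_2$. An elementary abelian $2$-group is a group isomorphic to $(\mathbb{Z}/2\mathbb{Z})^k$. *)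

theory Defs
  imports "HOL-Algebra.Algebra" "HOL-Analysis.Analysis"
begin

definition character :: "('a, 'b) monoid_scheme \<Rightarrow> ('a \<Rightarrow> complex) \<Rightarrow> bool" where
  "character G chi \<longleftrightarrow> (\<forall>x\<in>carrier G. chi x \<noteq> 0) \<and>
     (\<forall>x\<in>carrier G. \<forall>y\<in>carrier G. chi (x \<otimes>\<^bsub>G\<^esub> y) = chi x * chi y)"

definition trivial_char :: "('a, 'b) monoid_scheme \<Rightarrow> ('a \<Rightarrow> complex) \<Rightarrow> bool" where
  "trivial_char G chi \<longleftrightarrow> character G chi \<and> (\<forall>x\<in>carrier G. chi x = 1)"

definition pre_admissible ::
  "('a, 'b) monoid_scheme \<Rightarrow> 'a set \<Rightarrow> 'a set \<Rightarrow> ('a \<Rightarrow> complex) \<Rightarrow> bool" where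
  "pre_admissible G K Sig chi \<longleftrightarrow> character G chi \<and> (\<forall>k\<in>K. chi k = 1) \<and> (\<exists>s\<in>Sig. chi s \<noteq> 1)"

definition admissible1 where
  "admissible1 G K1 K2 K3 S1 S2 S3 chi1 chi2 chi3 \<longleftrightarrow>
     pre_admissible G K1 S1 chi1 \<and> pre_admissible G K2 S2 chi2 \<and> pre_admissible G K3 S3 chi3 \<and>
     (\<forall>x\<in>carrier G. chi3 x = cnj (chi1 x * chi2 x))"

definition admissible2 where
  "admissible2 G K1 K2 K3 S1 S2 S3 chi1 chi2 chi3 \<longleftrightarrow>
     (trivial_char G chi1 \<and> pre_admissible G K2 S2 chi2 \<and> pre_admissible G K3 S3 chi3 \<and>
        (\<forall>x\<in>carrier G. chi3 x = cnj (chi2 x))) \<or>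
     (trivial_char G chi2 \<and> pre_admissible G K1 S1 chi1 \<and> pre_admissible G K3 S3 chi3 \<and>
        (\<forall>x\<in>carrier G. chi3 x = cnj (chi1 x))) \<or>
     (trivial_char G chi3 \<and> pre_admissible G K1 S1 chi1 \<and> pre_admissible G K2 S2 chi2 \<and>
        (\<forall>x\<in>carrier G. chi2 x = cnj (chi1 x)))"

definition admissible where
  "admissible G K1 K2 K3 S1 S2 S3 chi1 chi2 chi3 \<longleftrightarrow>
     admissible1 G K1 K2 K3 S1 S2 S3 chi1 chi2 chi3 \<or> admissible2 G K1 K2 K3 S1 S2 S3 chi1 chi2 chi3"

text \<open>Value of a character (trivial on K_i) at an element of G/K_i, given as a coset:
  "chi(sigma) \<noteq> 1" means the character is \<noteq> 1 at (any, equivalently every) representative.\<close>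
definition char_ne_one_at :: "('a \<Rightarrow> complex) \<Rightarrow> 'a set \<Rightarrow> bool" where
  "char_ne_one_at chi \<sigma> \<longleftrightarrow> (\<forall>x\<in>\<sigma>. chi x \<noteq> 1)"

definition G_sigma where
  "G_sigma G K1 K2 K3 S1 S2 S3 \<sigma>1 \<sigma>2 \<sigma>3 =
     {\<tau> \<in> carrier (G \<times>\<times> G \<times>\<times> G). \<forall>chi1 chi2 chi3.
        admissible G K1 K2 K3 S1 S2 S3 chi1 chi2 chi3 \<and>
        char_ne_one_at chi1 \<sigma>1 \<and> char_ne_one_at chi2 \<sigma>2 \<and> char_ne_one_at chi3 \<sigma>3 \<longrightarrow>
        chi1 (fst \<tau>) * chi2 (fst (snd \<tau>)) * chi3 (snd (snd \<tau>)) = 1}"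

definition K_Delta where
  "K_Delta G K1 K2 K3 =
     {(k1 \<otimes>\<^bsub>G\<^esub> g, k2 \<otimes>\<^bsub>G\<^esub> g, k3 \<otimes>\<^bsub>G\<^esub> g) | k1 k2 k3 g.
        k1 \<in> K1 \<and> k2 \<in> K2 \<and> k3 \<in> K3 \<and> g \<in> carrier G}"

definition elementary_abelian_2_group :: "('a, 'b) monoid_scheme \<Rightarrow> bool" where
  "elementary_abelian_2_group H \<longleftrightarrow>
     (\<exists>k::nat. H \<cong> product_group {..<k} (\<lambda>_. integer_mod_group 2))"

text \<open>Curve data (via Riemann's existence theorem): G acts on a smooth projective curve C of
  genus g(C) \<ge> 2 with kernel K, g(C/G) = 1, and Sig is the union of the stabilizers.
  For the abelian group H = G/K acting faithfully this amounts to a generating vector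
  (a, b; c_1, ..., c_r) of type (1; ord c_1, ..., ord c_r): the c_j are nontrivial,
  [a,b] c_1 ... c_r = 1 (here [a,b] = 1 since H is abelian), the elements generate H,
  Riemann-Hurwitz gives 2 g(C) - 2 = |H| * sum (1 - 1/ord c_j), and the stabilizers in H
  are the (conjugates of the) cyclic groups <c_j>; Sig is their preimage in G.\<close>
definition curve_action_data ::
  "('a, 'b) monoid_scheme \<Rightarrow> 'a set \<Rightarrow> 'a set \<Rightarrow> bool" where
  "curve_action_data G K Sig \<longleftrightarrow>
     (\<exists>a b cs gC. a \<in> carrier (G Mod K) \<and> b \<in> carrier (G Mod K) \<and>
        set cs \<subseteq> carrier (G Mod K) \<and> (\<forall>c\<in>set cs. c \<noteq> \<one>\<^bsub>G Mod K\<^esub>) \<and>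
        a \<otimes>\<^bsub>G Mod K\<^esub> b \<otimes>\<^bsub>G Mod K\<^esub> inv\<^bsub>G Mod K\<^esub> a \<otimes>\<^bsub>G Mod K\<^esub> inv\<^bsub>G Mod K\<^esub> b
          \<otimes>\<^bsub>G Mod K\<^esub> foldr (\<otimes>\<^bsub>G Mod K\<^esub>) cs \<one>\<^bsub>G Mod K\<^esub> = \<one>\<^bsub>G Mod K\<^esub> \<and>
        generate (G Mod K) ({a, b} \<union> set cs) = carrier (G Mod K) \<and>
        2 * real gC - 2 = real (card (carrier (G Mod K))) *
            (\<Sum>c\<leftarrow>cs. 1 - 1 / real (group.ord (G Mod K) c)) \<and>
        gC \<ge> 2 \<and>
        Sig = {g \<in> carrier G. \<exists>c\<in>set cs. K #>\<^bsub>G\<^esub> g \<in> generate (G Mod K) {c}})"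

end

theory Submission
  imports Defs
begin

definition char_on :: "('a, 'b) monoid_scheme \<Rightarrow> 'a set \<Rightarrow> ('a \<Rightarrow> complex) \<Rightarrow> bool" where
  "char_on G A y \<longleftrightarrow> (\<forall>x\<in>A. y x \<noteq> 0) \<and> (\<forall>x\<in>A. \<forall>z\<in>A. y (x \<otimes>\<^bsub>G\<^esub> z) = y x * y z)"

definition ext_set :: "('a, 'b) monoid_scheme \<Rightarrow> 'a set \<Rightarrow> 'a \<Rightarrow> 'a set" where
  "ext_set G A h = {a \<otimes>\<^bsub>G\<^esub> h [^]\<^bsub>G\<^esub> (k::nat) | a k. a \<in> A}"

lemma complex_root_exists:
  assumes "m > 0" "(z::complex) \<noteq> 0" shows "\<exists>w. w ^ m = z"
proof -
  have "exp (Ln z / of_nat m) ^ m = exp (of_nat m * (Ln z / of_nat m))"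
    by (rule exp_of_nat_mult[symmetric])
  also have "\<dots> = exp (Ln z)" using assms by simp
  also have "\<dots> = z" using assms by simp
  finally show ?thesis by blast
qed

lemma zeta_pow_eq_1:
  assumes "m > 0"
  shows "exp (2 * of_real pi * \<i> / of_nat m) ^ k = 1 \<longleftrightarrow> m dvd k"
proof -
  have e: "exp (2 * of_real pi * \<i> / of_nat m) ^ k = exp (of_nat k * (2 * of_real pi * \<i> / of_nat m))"
    by (rule exp_of_nat_mult[symmetric])
  have "of_nat k * (2 * of_real pi * \<i> / of_nat m) = \<i> * of_real (2 * pi * real k / real m)"
    by (simp add: field_simps)
  then have im: "Im (of_nat k * (2 * of_real pi * \<i> / of_nat m)) = 2 * pi * real k / real m"
    "Re (of_nat k * (2 * of_real pi * \<i> / of_nat m)) = 0" by simp_all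
  have "(\<exists>n::int. 2 * pi * real k / real m = of_int (2 * n) * pi) \<longleftrightarrow> m dvd k"
  proof
    assume "\<exists>n::int. 2 * pi * real k / real m = of_int (2 * n) * pi"
    then obtain n :: int where n: "2 * pi * real k / real m = of_int (2 * n) * pi" by blast
    then have "real k = of_int n * real m" using assms pi_gt_zero
      by (simp add: field_simps)
    then have "int k = n * int m" by (metis of_int_eq_iff of_int_mult of_int_of_nat_eq)
    then have "int m dvd int k" by simp
    then show "m dvd k" by simp
  next
    assume "m dvd k"
    then obtain q where "k = m * q" by blast
    then show "\<exists>n::int. 2 * pi * real k / real m = of_int (2 * n) * pi"
      using assms by (intro exI[of _ "int q"]) (simp add: field_simps)
  qed
  then show ?thesis unfolding e exp_eq_1 im by simp
qed

lemma root_ne: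
  assumes "m \<ge> 2" "(z::complex) \<noteq> 0" shows "\<exists>w. w ^ m = z \<and> w \<noteq> 1"
proof -
  obtain w0 where w0: "w0 ^ m = z" using complex_root_exists assms by force
  define \<zeta> where "\<zeta> = exp (2 * of_real pi * \<i> / of_nat m)"
  have z1: "\<zeta> ^ m = 1" unfolding \<zeta>_def using assms zeta_pow_eq_1 by simp
  have z2: "\<zeta> \<noteq> 1" using zeta_pow_eq_1[of m 1] assms unfolding \<zeta>_def by auto
  show ?thesis
  proof (cases "w0 = 1")
    case True
    then show ?thesis using w0 z1 z2 by (intro exI[of _ \<zeta>]) auto
  next
    case False then show ?thesis using w0 by blast
  qed
qed

lemma root_unity_avoid:
  assumes "m > 0" "\<not> m dvd 2 * r"
  shows "\<exists>w::complex. w ^ m = 1 \<and> w \<noteq> 1 \<and> w ^ r \<noteq> c"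
proof -
  define \<zeta> where "\<zeta> = exp (2 * of_real pi * \<i> / of_nat m)"
  have zp: "\<And>k. \<zeta> ^ k = 1 \<longleftrightarrow> m dvd k" unfolding \<zeta>_def using assms zeta_pow_eq_1 by simp
  have m1: "\<not> m dvd 1" using assms by auto
  have zn: "\<zeta> \<noteq> 0" unfolding \<zeta>_def by simp
  have A: "\<zeta> ^ m = 1" "\<zeta> \<noteq> 1" using zp[of m] zp[of 1] m1 by auto
  have B: "(inverse \<zeta>) ^ m = 1" "inverse \<zeta> \<noteq> 1" using A by (auto simp: power_inverse)
  show ?thesis
  proof (cases "\<zeta> ^ r = c")
    case False then show ?thesis using A by blast
  next
    case True
    have "(inverse \<zeta>) ^ r \<noteq> c"
    proof
      assume "(inverse \<zeta>) ^ r = c"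
      then have "\<zeta> ^ r * inverse (\<zeta> ^ r) = 1" using zn by simp
      then have "\<zeta> ^ r * \<zeta> ^ r = 1" using True \<open>(inverse \<zeta>) ^ r = c\<close> by (simp add: power_inverse)
      then have "\<zeta> ^ (2 * r) = 1" by (simp add: power_mult power2_eq_square mult.commute power_mult_distrib)
      then show False using zp assms by blast
    qed
    then show ?thesis using B by blast
  qed
qed

context comm_group
begin

lemma swap4: "a \<in> carrier G \<Longrightarrow> b \<in> carrier G \<Longrightarrow> c \<in> carrier G \<Longrightarrow> d \<in> carrier G \<Longrightarrow>
  (a \<otimes> c) \<otimes> (b \<otimes> d) = (a \<otimes> b) \<otimes> (c \<otimes> d)"
  by (simp add: m_ac)

lemma sg_pow_closed: "subgroup H G \<Longrightarrow> x \<in> H \<Longrightarrow> x [^] (n::nat) \<in> H"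
proof (induction n)
  case 0 then show ?case by (simp add: subgroup.one_closed)
next
  case (Suc n) then show ?case by (metis nat_pow_Suc subgroup.m_closed subgroup.mem_carrier)
qed

lemma char_on_one:
  assumes "char_on G A y" "\<one> \<in> A" shows "y \<one> = 1"
proof -
  have "y \<one> = y \<one> * y \<one>" using assms unfolding char_on_def by (metis l_one one_closed)
  moreover have "y \<one> \<noteq> 0" using assms unfolding char_on_def by blast
  ultimately show ?thesis by (metis mult_cancel_left1)
qed

lemma char_on_pow:
  assumes "char_on G A y" "subgroup A G" "x \<in> A" shows "y (x [^] (n::nat)) = y x ^ n"
proof (induction n)
  case 0 then show ?case using char_on_one[OF assms(1)] assms(2) subgroup.one_closed by auto
next
  case (Suc n)
  have "x [^] n \<in> A" using assms sg_pow_closed by blast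
  then have "y (x [^] n \<otimes> x) = y (x [^] n) * y x" using assms unfolding char_on_def by blast
  then show ?case using Suc by simp
qed

lemma ext_set_subgroup:
  assumes A: "subgroup A G" and h: "h \<in> carrier G" and n: "h [^] (n::nat) \<in> A" and n0: "n > 0"
  shows "subgroup (ext_set G A h) G"
proof (rule subgroupI)
  have Ac: "A \<subseteq> carrier G" using A subgroup.subset by blast
  show "ext_set G A h \<subseteq> carrier G" unfolding ext_set_def using Ac h by auto
  show "ext_set G A h \<noteq> {}" unfolding ext_set_def using subgroup.one_closed[OF A] by blast
  fix x y assume x: "x \<in> ext_set G A h"
  then obtain a and k :: nat where a: "a \<in> A" "x = a \<otimes> h [^] k" unfolding ext_set_def by blast
  have ac: "a \<in> carrier G" using a Ac by auto
  have hn: "h [^] n \<in> carrier G" using h by simp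
  have "inv x = (inv a \<otimes> inv ((h [^] n) [^] k)) \<otimes> h [^] ((n - 1) * k)"
  proof -
    have "(h [^] n) [^] k = h [^] k \<otimes> h [^] ((n - 1) * k)"
    proof -
      have nk: "n * k = k + (n - 1) * k" using n0 by (cases n) auto
      have "(h [^] n) [^] k = h [^] (n * k)" using h by (simp add: nat_pow_pow)
      also have "\<dots> = h [^] k \<otimes> h [^] ((n - 1) * k)" unfolding nk using h by (simp add: nat_pow_mult)
      finally show ?thesis .
    qed
    then have "inv ((h [^] n) [^] k) = inv (h [^] ((n - 1) * k)) \<otimes> inv (h [^] k)"
      using h by (simp add: inv_mult_group)
    moreover have "inv (h [^] ((n - 1) * k)) \<otimes> inv (h [^] k) \<otimes> h [^] ((n - 1) * k) = inv (h [^] k)"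
    proof -
      have X: "h [^] ((n - 1) * k) \<in> carrier G" "inv (h [^] k) \<in> carrier G" using h by auto
      have "inv (h [^] ((n - 1) * k)) \<otimes> inv (h [^] k) \<otimes> h [^] ((n - 1) * k)
          = inv (h [^] k) \<otimes> (inv (h [^] ((n - 1) * k)) \<otimes> h [^] ((n - 1) * k))"
        using X by (simp add: m_ac)
      then show ?thesis using X by simp
    qed
    ultimately have "inv ((h [^] n) [^] k) \<otimes> h [^] ((n - 1) * k) = inv (h [^] k)" by simp
    then have "(inv a \<otimes> inv ((h [^] n) [^] k)) \<otimes> h [^] ((n - 1) * k) = inv a \<otimes> inv (h [^] k)"
      using ac h by (simp add: m_assoc)
    moreover have "inv x = inv a \<otimes> inv (h [^] k)" using a ac h by (simp add: inv_mult)
    ultimately show ?thesis by simp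
  qed
  moreover have "inv a \<otimes> inv ((h [^] n) [^] k) \<in> A"
    using A a sg_pow_closed[OF A n, of k] by (intro subgroup.m_closed subgroup.m_inv_closed) auto
  ultimately show "inv x \<in> ext_set G A h" unfolding ext_set_def by blast
  assume y: "y \<in> ext_set G A h"
  then obtain b and j :: nat where b: "b \<in> A" "y = b \<otimes> h [^] j" unfolding ext_set_def by blast
  have bc: "b \<in> carrier G" using b Ac by auto
  have "x \<otimes> y = (a \<otimes> b) \<otimes> (h [^] k \<otimes> h [^] j)" unfolding a(2) b(2) using ac bc h
    by (intro swap4) auto
  then have "x \<otimes> y = (a \<otimes> b) \<otimes> h [^] (k + j)" using h by (simp add: nat_pow_mult)
  moreover have "a \<otimes> b \<in> A" using subgroup.m_closed[OF A a(1) b(1)] .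
  ultimately show "x \<otimes> y \<in> ext_set G A h" unfolding ext_set_def by blast
qed

lemma ext_set_mem: "a \<in> A \<Longrightarrow> a \<otimes> h [^] (k::nat) \<in> ext_set G A h"
  unfolding ext_set_def by blast

lemma ext_set_sup:
  assumes "subgroup A G" "h \<in> carrier G" shows "A \<subseteq> ext_set G A h" "h \<in> ext_set G A h"
proof -
  show "A \<subseteq> ext_set G A h"
  proof
    fix a assume "a \<in> A"
    then have "a = a \<otimes> h [^] (0::nat)" using assms subgroup.subset by force
    then show "a \<in> ext_set G A h" using ext_set_mem[OF \<open>a \<in> A\<close>, of h 0] by simp
  qed
  have "h = \<one> \<otimes> h [^] (1::nat)" using assms by simp
  then show "h \<in> ext_set G A h" using ext_set_mem[OF subgroup.one_closed[OF assms(1)], of h 1] by simp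
qed

end

context comm_group
begin
lemma ext_char:
  assumes A: "subgroup A G" and y: "char_on G A y" and h: "h \<in> carrier G"
    and m: "(m::nat) > 0" "h [^] m \<in> A" and least: "\<And>k. 0 < k \<Longrightarrow> k < m \<Longrightarrow> h [^] k \<notin> A"
    and w: "w ^ m = y (h [^] m)"
  shows "\<exists>y'. char_on G (ext_set G A h) y' \<and> (\<forall>a\<in>A. y' a = y a) \<and> y' h = w"
proof -
  have Ac: "A \<subseteq> carrier G" using A subgroup.subset by blast
  have yhm: "y (h [^] m) \<noteq> 0" using y m unfolding char_on_def by blast
  have wnz: "w \<noteq> 0" using w yhm m by (auto simp: power_0_left)
  have wd1: "y a * w ^ k = y a' * w ^ k'"
    if a: "a \<in> A" "a' \<in> A" and eq: "a \<otimes> h [^] k = a' \<otimes> h [^] k'" and kk: "k' \<le> k" for a a' and k k' :: nat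
  proof -
    define d where "d = k - k'"
    have ac: "a \<in> carrier G" "a' \<in> carrier G" using a Ac by auto
    have "a \<otimes> h [^] d \<otimes> h [^] k' = a' \<otimes> h [^] k'"
      using eq kk ac h unfolding d_def by (simp add: m_assoc nat_pow_mult)
    then have ad: "a \<otimes> h [^] d = a'" using ac h r_cancel[of "h [^] k'" "a \<otimes> h [^] d" a'] by simp
    define q where "q = d div m"
    define r where "r = d mod m"
    have dqr: "d = m * q + r" unfolding q_def r_def by simp
    have hd: "h [^] d = (h [^] m) [^] q \<otimes> h [^] r" unfolding dqr using h by (simp add: nat_pow_mult nat_pow_pow)
    have "h [^] r = inv (a \<otimes> (h [^] m) [^] q) \<otimes> a'"
    proof -
      have "a' = (a \<otimes> (h [^] m) [^] q) \<otimes> h [^] r" using ad hd ac h by (simp add: m_assoc)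
      moreover have X: "a \<otimes> (h [^] m) [^] q \<in> carrier G" using ac h by simp
      ultimately have "inv (a \<otimes> (h [^] m) [^] q) \<otimes> a' = (inv (a \<otimes> (h [^] m) [^] q) \<otimes> (a \<otimes> (h [^] m) [^] q)) \<otimes> h [^] r"
        using h by (simp only: m_assoc inv_closed nat_pow_closed)
      then show ?thesis using X h by simp
    qed
    moreover have "inv (a \<otimes> (h [^] m) [^] q) \<otimes> a' \<in> A"
      using A a sg_pow_closed[OF A m(2), of q] by (intro subgroup.m_closed subgroup.m_inv_closed) auto
    ultimately have "h [^] r \<in> A" by simp
    moreover have "r < m" unfolding r_def using m by simp
    ultimately have r0: "r = 0" using least[of r] by auto
    then have "a' = a \<otimes> (h [^] m) [^] q" using ad hd h by simp
    then have "y a' = y a * y ((h [^] m) [^] q)"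
      using y a sg_pow_closed[OF A m(2), of q] unfolding char_on_def by blast
    also have "\<dots> = y a * w ^ (m * q)" using char_on_pow[OF y A m(2)] w by (simp add: power_mult)
    finally have "y a' = y a * w ^ d" using dqr r0 by simp
    then show ?thesis using kk unfolding d_def by (simp add: power_add[symmetric])
  qed
  have wd: "y a * w ^ k = y a' * w ^ k'"
    if H: "a \<in> A" "a' \<in> A" "a \<otimes> h [^] k = a' \<otimes> h [^] k'" for a a' and k k' :: nat
  proof (cases "k' \<le> k")
    case True show ?thesis by (rule wd1[OF H True])
  next
    case False
    then have "k \<le> k'" by simp
    from wd1[OF H(2) H(1) H(3)[symmetric] this] show ?thesis by (rule sym)
  qed
  define y' where "y' x = (SOME v. \<exists>a k. a \<in> A \<and> x = a \<otimes> h [^] (k::nat) \<and> v = y a * w ^ k)" for x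
  have y'eq: "y' (a \<otimes> h [^] k) = y a * w ^ k" if "a \<in> A" for a and k :: nat
  proof -
    have "\<exists>v. \<exists>a' k'. a' \<in> A \<and> a \<otimes> h [^] k = a' \<otimes> h [^] (k'::nat) \<and> v = y a' * w ^ k'"
      using that by (intro exI[of _ "y a * w ^ k"] exI[of _ a] exI[of _ k]) simp
    then have "\<exists>a' k'. a' \<in> A \<and> a \<otimes> h [^] k = a' \<otimes> h [^] (k'::nat) \<and> y' (a \<otimes> h [^] k) = y a' * w ^ k'"
      unfolding y'_def by (rule someI_ex)
    then obtain a' k' where aa: "a' \<in> A" "a \<otimes> h [^] k = a' \<otimes> h [^] (k'::nat)"
      "y' (a \<otimes> h [^] k) = y a' * w ^ k'" by blast
    show ?thesis using wd[OF that aa(1) aa(2)] aa(3) by simp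
  qed
  show ?thesis
  proof (intro exI conjI ballI)
    show "char_on G (ext_set G A h) y'" unfolding char_on_def
    proof (intro conjI ballI)
      fix x assume "x \<in> ext_set G A h"
      then obtain a and k :: nat where a: "a \<in> A" "x = a \<otimes> h [^] k" unfolding ext_set_def by blast
      show "y' x \<noteq> 0" using y'eq[OF a(1)] a y wnz unfolding char_on_def by simp
      fix z assume "z \<in> ext_set G A h"
      then obtain b and j :: nat where b: "b \<in> A" "z = b \<otimes> h [^] j" unfolding ext_set_def by blast
      have ab: "a \<in> carrier G" "b \<in> carrier G" using a b Ac by auto
      have "x \<otimes> z = (a \<otimes> b) \<otimes> (h [^] k \<otimes> h [^] j)" unfolding a(2) b(2) using ab h
        by (intro swap4) auto
      then have "x \<otimes> z = (a \<otimes> b) \<otimes> h [^] (k + j)" using h by (simp add: nat_pow_mult)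
      moreover have "a \<otimes> b \<in> A" using subgroup.m_closed[OF A a(1) b(1)] .
      ultimately have "y' (x \<otimes> z) = y (a \<otimes> b) * w ^ (k + j)" using y'eq by simp
      also have "\<dots> = (y a * w ^ k) * (y b * w ^ j)" using y a b unfolding char_on_def
        by (simp add: power_add)
      finally show "y' (x \<otimes> z) = y' x * y' z" using y'eq a b by simp
    qed
  next
    fix a assume a: "a \<in> A"
    have "a = a \<otimes> h [^] (0::nat)" using a Ac by auto
    then show "y' a = y a" using y'eq[OF a, of 0] by simp
  next
    have "h = \<one> \<otimes> h [^] (1::nat)" using h by simp
    then have "y' h = y \<one> * w" using y'eq[OF subgroup.one_closed[OF A], of 1] by simp
    then show "y' h = w" using char_on_one[OF y subgroup.one_closed[OF A]] by simp
  qed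
qed

lemma least_pow_in:
  assumes fin: "finite (carrier G)" and A: "subgroup A G" and h: "h \<in> carrier G"
  shows "\<exists>m::nat. m > 0 \<and> h [^] m \<in> A \<and> (\<forall>k. 0 < k \<longrightarrow> k < m \<longrightarrow> h [^] k \<notin> A)"
proof -
  have "Coset.order G > (0::nat)" using fin one_closed unfolding Coset.order_def by (auto simp: card_gt_0_iff)
  moreover have "h [^] Coset.order G \<in> A" using pow_order_eq_1[OF h] subgroup.one_closed[OF A] by simp
  ultimately have ex: "\<exists>m::nat. 0 < m \<and> h [^] m \<in> A" by blast
  define m where "m = (LEAST m::nat. 0 < m \<and> h [^] m \<in> A)"
  have "0 < m \<and> h [^] m \<in> A" using LeastI_ex[OF ex] unfolding m_def .
  moreover have "\<forall>k. 0 < k \<longrightarrow> k < m \<longrightarrow> h [^] k \<notin> A"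
    using not_less_Least unfolding m_def by blast
  ultimately show ?thesis by blast
qed

lemma ext_full:
  assumes fin: "finite (carrier G)"
  shows "subgroup A G \<Longrightarrow> char_on G A y \<Longrightarrow> \<exists>x. char_on G (carrier G) x \<and> (\<forall>a\<in>A. x a = y a)"
proof (induction "card (carrier G) - card A" arbitrary: A y rule: less_induct)
  case less
  show ?case
  proof (cases "A = carrier G")
    case True show ?thesis using less.prems(2) True by (intro exI[of _ y]) simp
  next
    case False
    have Ac: "A \<subseteq> carrier G" using less.prems subgroup.subset by blast
    then obtain h where h: "h \<in> carrier G" "h \<notin> A" using False by blast
    obtain m :: nat where m: "m > 0" "h [^] m \<in> A" "\<And>k. 0 < k \<Longrightarrow> k < m \<Longrightarrow> h [^] k \<notin> A"
      using least_pow_in[OF fin less.prems(1) h(1)] by blast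
    have "y (h [^] m) \<noteq> 0" using less.prems(2) m unfolding char_on_def by blast
    then obtain w where w: "w ^ m = y (h [^] m)" using complex_root_exists m by blast
    obtain y' where y': "char_on G (ext_set G A h) y'" "\<forall>a\<in>A. y' a = y a"
      using ext_char[OF less.prems h(1) m w] by blast
    have sg: "subgroup (ext_set G A h) G" using ext_set_subgroup[OF less.prems(1) h(1) m(2) m(1)] .
    have sub: "A \<subset> ext_set G A h" using ext_set_sup[OF less.prems(1) h(1)] h(2) by blast
    have fe: "finite (ext_set G A h)" using finite_subset[OF subgroup.subset[OF sg] fin] .
    have "card A < card (ext_set G A h)" using psubset_card_mono[OF fe sub] .
    moreover have "card (ext_set G A h) \<le> card (carrier G)" using card_mono[OF fin subgroup.subset[OF sg]] .
    ultimately have "card (carrier G) - card (ext_set G A h) < card (carrier G) - card A" by simp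
    from less.hyps[OF this sg y'(1)] obtain x where x: "char_on G (carrier G) x" "\<forall>a\<in>ext_set G A h. x a = y' a"
      by blast
    have "\<forall>a\<in>A. x a = y a" using x(2) y'(2) sub by auto
    then show ?thesis using x(1) by blast
  qed
qed

end

context comm_group
begin

lemma pow_cancel:
  assumes "x \<in> carrier G" "finite (carrier G)"
  shows "x [^] (p * (Coset.order G - 1)) \<otimes> x [^] p = \<one>"
proof -
  have o: "Coset.order G > 0" using assms one_closed unfolding Coset.order_def by (auto simp: card_gt_0_iff)
  have "p * (Coset.order G - 1) + p = Coset.order G * p" using o by (cases "Coset.order G") auto
  then have "x [^] (p * (Coset.order G - 1)) \<otimes> x [^] p = (x [^] Coset.order G) [^] p"
    using assms by (simp add: nat_pow_mult nat_pow_pow)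
  also have "\<dots> = \<one>" using pow_order_eq_1[OF assms(1)] by simp
  finally show ?thesis .
qed

lemma rearr6:
  assumes "x1 \<in> carrier G" "x2 \<in> carrier G" "d \<in> carrier G" "y1 \<in> carrier G" "y2 \<in> carrier G"
  shows "x1 \<otimes> x2 \<otimes> ((d \<otimes> y1) \<otimes> y2) = d \<otimes> (x1 \<otimes> y1) \<otimes> (x2 \<otimes> y2)"
  using assms by (simp add: m_ac)

lemma A2_back:
  assumes fin: "finite (carrier G)" and D: "subgroup D G"
    and b: "b1 \<in> carrier G" "b2 \<in> carrier G" "b3 \<in> carrier G"
    and Ind: "\<And>p q r. b1 [^] (p::nat) \<otimes> b2 [^] (q::nat) \<otimes> b3 [^] (r::nat) \<in> D \<Longrightarrow>
                 b1 [^] p \<in> D \<and> b2 [^] q \<in> D \<and> b3 [^] r \<in> D"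
    and d: "d \<in> D" and eq: "b3 [^] (k::nat) = (d \<otimes> b1 [^] (p::nat)) \<otimes> b2 [^] (q::nat)"
  shows "b3 [^] k \<in> D"
proof -
  let ?N = "Coset.order G - 1"
  have dc: "d \<in> carrier G" using d D subgroup.subset by blast
  have "b1 [^] (p * ?N) \<otimes> b2 [^] (q * ?N) \<otimes> b3 [^] k
      = d \<otimes> (b1 [^] (p * ?N) \<otimes> b1 [^] p) \<otimes> (b2 [^] (q * ?N) \<otimes> b2 [^] q)"
    unfolding eq using b dc by (intro rearr6) auto
  also have "\<dots> = d" using pow_cancel[OF b(1) fin] pow_cancel[OF b(2) fin] dc by simp
  finally show ?thesis using Ind d by metis
qed

lemma A1_back:
  assumes fin: "finite (carrier G)" and D: "subgroup D G"
    and b: "b1 \<in> carrier G" "b2 \<in> carrier G" "b3 \<in> carrier G"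
    and Ind: "\<And>p q r. b1 [^] (p::nat) \<otimes> b2 [^] (q::nat) \<otimes> b3 [^] (r::nat) \<in> D \<Longrightarrow>
                 b1 [^] p \<in> D \<and> b2 [^] q \<in> D \<and> b3 [^] r \<in> D"
    and d: "d \<in> D" and eq: "b2 [^] (k::nat) = d \<otimes> b1 [^] (p::nat)"
  shows "b2 [^] k \<in> D"
proof -
  have "b2 [^] k = (d \<otimes> b1 [^] p) \<otimes> b3 [^] (0::nat)" using eq b d D subgroup.subset by fastforce
  moreover have "\<And>p q r. b1 [^] (p::nat) \<otimes> b3 [^] (q::nat) \<otimes> b2 [^] (r::nat) \<in> D \<Longrightarrow>
                 b1 [^] p \<in> D \<and> b3 [^] q \<in> D \<and> b2 [^] r \<in> D"
  proof -
    fix p q r :: nat assume "b1 [^] p \<otimes> b3 [^] q \<otimes> b2 [^] r \<in> D"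
    moreover have "b1 [^] p \<otimes> b3 [^] q \<otimes> b2 [^] r = b1 [^] p \<otimes> b2 [^] r \<otimes> b3 [^] q"
      using b by (simp add: m_ac)
    ultimately show "b1 [^] p \<in> D \<and> b3 [^] q \<in> D \<and> b2 [^] r \<in> D" using Ind by auto
  qed
  ultimately show ?thesis using A2_back[OF fin D b(1) b(3) b(2) _ d] by blast
qed

lemma step_ne1:
  assumes fin: "finite (carrier G)" and A: "subgroup A G" and y: "char_on G A y"
    and h: "h \<in> carrier G" "h \<notin> A"
  shows "\<exists>y'. subgroup (ext_set G A h) G \<and> char_on G (ext_set G A h) y' \<and> (\<forall>a\<in>A. y' a = y a) \<and> y' h \<noteq> 1"
proof -
  obtain m :: nat where m: "m > 0" "h [^] m \<in> A" "\<And>k. 0 < k \<Longrightarrow> k < m \<Longrightarrow> h [^] k \<notin> A"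
    using least_pow_in[OF fin A h(1)] by blast
  have "m \<noteq> 1" using m(2) h by auto
  then have m2: "m \<ge> 2" using m(1) by simp
  have "y (h [^] m) \<noteq> 0" using y m unfolding char_on_def by blast
  then obtain w where w: "w ^ m = y (h [^] m)" "w \<noteq> 1" using root_ne[OF m2] by blast
  obtain y' where "char_on G (ext_set G A h) y'" "\<forall>a\<in>A. y' a = y a" "y' h = w"
    using ext_char[OF A y h(1) m w(1)] by blast
  moreover have "subgroup (ext_set G A h) G" using ext_set_subgroup[OF A h(1) m(2) m(1)] .
  ultimately show ?thesis using w(2) by blast
qed

lemma step_sp:
  assumes fin: "finite (carrier G)" and A: "subgroup A G" and y: "char_on G A y"
    and h: "h \<in> carrier G" and triv: "\<And>k::nat. h [^] k \<in> A \<Longrightarrow> y (h [^] k) = 1"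
    and r: "h [^] (2 * (r::nat)) \<notin> A"
  shows "\<exists>y'. subgroup (ext_set G A h) G \<and> char_on G (ext_set G A h) y' \<and> (\<forall>a\<in>A. y' a = y a)
              \<and> y' h \<noteq> 1 \<and> y' h ^ r \<noteq> c"
proof -
  obtain m :: nat where m: "m > 0" "h [^] m \<in> A" "\<And>k. 0 < k \<Longrightarrow> k < m \<Longrightarrow> h [^] k \<notin> A"
    using least_pow_in[OF fin A h(1)] by blast
  have nd: "\<not> m dvd 2 * r"
  proof
    assume "m dvd 2 * r"
    then obtain t where t: "2 * r = m * t" by blast
    have "h [^] (2 * r) = (h [^] m) [^] t" unfolding t using h by (simp add: nat_pow_pow)
    also have "\<dots> \<in> A" using sg_pow_closed[OF A m(2)] .
    finally show False using r by simp
  qed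
  obtain w where w: "w ^ m = 1" "w \<noteq> 1" "w ^ r \<noteq> c" using root_unity_avoid[OF m(1) nd] by blast
  have "w ^ m = y (h [^] m)" using w(1) triv[OF m(2)] by simp
  then obtain y' where "char_on G (ext_set G A h) y'" "\<forall>a\<in>A. y' a = y a" "y' h = w"
    using ext_char[OF A y h(1) m] by blast
  moreover have "subgroup (ext_set G A h) G" using ext_set_subgroup[OF A h(1) m(2) m(1)] .
  ultimately show ?thesis using w by blast
qed

end

context comm_group
begin

lemma char_on_const1: "char_on G D (\<lambda>_. 1)" unfolding char_on_def by simp

lemma ext_set_elim:
  assumes "x \<in> ext_set G A h" obtains a and k :: nat where "a \<in> A" "x = a \<otimes> h [^] k"
  using assms unfolding ext_set_def by blast

lemma key_ord:
  assumes fin: "finite (carrier G)" and D: "subgroup D G"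
    and b: "b1 \<in> carrier G" "b2 \<in> carrier G" "b3 \<in> carrier G"
    and Ind: "\<And>p q r. b1 [^] (p::nat) \<otimes> b2 [^] (q::nat) \<otimes> b3 [^] (r::nat) \<in> D \<Longrightarrow>
                 b1 [^] p \<in> D \<and> b2 [^] q \<in> D \<and> b3 [^] r \<in> D"
    and nb: "b1 \<notin> D" "b2 \<notin> D"
    and d: "d \<in> D" and tau: "\<tau> = ((d \<otimes> b1 [^] (p::nat)) \<otimes> b2 [^] (q::nat)) \<otimes> b3 [^] (r::nat)"
    and r2: "b3 [^] (2 * r) \<notin> D"
  shows "\<exists>x. char_on G (carrier G) x \<and> (\<forall>d\<in>D. x d = 1) \<and> x b1 \<noteq> 1 \<and> x b2 \<noteq> 1 \<and> x b3 \<noteq> 1 \<and> x \<tau> \<noteq> 1"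
proof -
  have Dc: "D \<subseteq> carrier G" using D subgroup.subset by blast
  define A1 where "A1 = ext_set G D b1"
  obtain y1 where y1: "subgroup A1 G" "char_on G A1 y1" "\<forall>a\<in>D. y1 a = 1" "y1 b1 \<noteq> 1"
    using step_ne1[OF fin D char_on_const1 b(1) nb(1)] unfolding A1_def by blast
  have DA1: "D \<subseteq> A1" "b1 \<in> A1" using ext_set_sup[OF D b(1)] unfolding A1_def by auto
  have b2A1: "b2 \<notin> A1"
  proof
    assume "b2 \<in> A1"
    then obtain a and k :: nat where "a \<in> D" "b2 = a \<otimes> b1 [^] k" unfolding A1_def by (rule ext_set_elim)
    then have "b2 [^] (1::nat) \<in> D" using A1_back[OF fin D b Ind, of a 1 k] b by simp
    then show False using nb b by simp
  qed
  define A2 where "A2 = ext_set G A1 b2"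
  obtain y2 where y2: "subgroup A2 G" "char_on G A2 y2" "\<forall>a\<in>A1. y2 a = y1 a" "y2 b2 \<noteq> 1"
    using step_ne1[OF fin y1(1) y1(2) b(2) b2A1] unfolding A2_def by blast
  have A1A2: "A1 \<subseteq> A2" "b2 \<in> A2" using ext_set_sup[OF y1(1) b(2)] unfolding A2_def by auto
  have back2: "b3 [^] k \<in> D" if H: "b3 [^] k \<in> A2" for k :: nat
  proof -
    obtain a and j :: nat where a: "a \<in> A1" "b3 [^] k = a \<otimes> b2 [^] j"
      using H unfolding A2_def by (rule ext_set_elim)
    obtain e and i :: nat where e: "e \<in> D" "a = e \<otimes> b1 [^] i"
      using a(1) unfolding A1_def by (rule ext_set_elim)
    show ?thesis using A2_back[OF fin D b Ind e(1), of k i j] a e by simp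
  qed
  have triv: "y2 (b3 [^] k) = 1" if "b3 [^] k \<in> A2" for k :: nat
    using back2[OF that] y2(3) y1(3) DA1 by auto
  have r2': "b3 [^] (2 * r) \<notin> A2" using back2 r2 by blast
  define e where "e = (d \<otimes> b1 [^] p) \<otimes> b2 [^] q"
  have eA2: "e \<in> A2" unfolding e_def A2_def A1_def by (intro ext_set_mem) (rule d)
  have y2e: "y2 e \<noteq> 0" using y2(2) eA2 unfolding char_on_def by blast
  define A3 where "A3 = ext_set G A2 b3"
  obtain y3 where y3: "subgroup A3 G" "char_on G A3 y3" "\<forall>a\<in>A2. y3 a = y2 a" "y3 b3 \<noteq> 1"
      "y3 b3 ^ r \<noteq> inverse (y2 e)"
    using step_sp[OF fin y2(1) y2(2) b(3) triv r2', of "inverse (y2 e)"] unfolding A3_def by blast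
  have A2A3: "A2 \<subseteq> A3" "b3 \<in> A3" using ext_set_sup[OF y2(1) b(3)] unfolding A3_def by auto
  have b3r: "b3 [^] r \<in> A3" using sg_pow_closed[OF y3(1) A2A3(2)] .
  have "y3 \<tau> = y3 e * y3 (b3 [^] r)" unfolding tau e_def[symmetric]
    using y3(2) eA2 A2A3 b3r unfolding char_on_def by blast
  also have "\<dots> = y2 e * y3 b3 ^ r" using y3(3) eA2 char_on_pow[OF y3(2) y3(1) A2A3(2)] by simp
  finally have y3e: "y3 \<tau> = y2 e * y3 b3 ^ r" .
  have y3t: "y3 \<tau> \<noteq> 1"
  proof
    assume "y3 \<tau> = 1"
    then have "y2 e * y3 b3 ^ r = 1" using y3e by simp
    then have "inverse (y2 e) = y3 b3 ^ r" by (rule inverse_unique)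
    then show False using y3(5) by simp
  qed
  obtain x where x: "char_on G (carrier G) x" "\<forall>a\<in>A3. x a = y3 a"
    using ext_full[OF fin y3(1) y3(2)] by blast
  have tA3: "\<tau> \<in> A3" unfolding tau e_def[symmetric] A3_def by (intro ext_set_mem) (rule eA2)
  show ?thesis
  proof (intro exI conjI ballI)
    show "char_on G (carrier G) x" by (rule x(1))
    show "x d' = 1" if "d' \<in> D" for d'
    proof -
      have "d' \<in> A1" "d' \<in> A2" "d' \<in> A3" using that DA1 A1A2 A2A3 by auto
      then show ?thesis using that x(2) y3(3) y2(3) y1(3) by simp
    qed
    have m1: "b1 \<in> A2" "b1 \<in> A3" "b2 \<in> A3" using DA1 A1A2 A2A3 by auto
    show "x b1 \<noteq> 1" using x(2) y3(3) y2(3) y1(4) DA1 A1A2 A2A3 m1 by simp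
    show "x b2 \<noteq> 1" using x(2) y3(3) y2(4) A1A2 A2A3 m1 by simp
    show "x b3 \<noteq> 1" using x(2) y3(4) A2A3 by simp
    show "x \<tau> \<noteq> 1" using x(2) y3t tA3 by simp
  qed
qed

lemma key_out:
  assumes fin: "finite (carrier G)" and D: "subgroup D G"
    and b: "b1 \<in> carrier G" "b2 \<in> carrier G" "b3 \<in> carrier G"
    and Ind: "\<And>p q r. b1 [^] (p::nat) \<otimes> b2 [^] (q::nat) \<otimes> b3 [^] (r::nat) \<in> D \<Longrightarrow>
                 b1 [^] p \<in> D \<and> b2 [^] q \<in> D \<and> b3 [^] r \<in> D"
    and nb: "b1 \<notin> D" "b2 \<notin> D" "b3 \<notin> D"
    and t: "\<tau> \<in> carrier G" "\<tau> \<notin> ext_set G (ext_set G (ext_set G D b1) b2) b3"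
  shows "\<exists>x. char_on G (carrier G) x \<and> (\<forall>d\<in>D. x d = 1) \<and> x b1 \<noteq> 1 \<and> x b2 \<noteq> 1 \<and> x b3 \<noteq> 1 \<and> x \<tau> \<noteq> 1"
proof -
  define A1 where "A1 = ext_set G D b1"
  obtain y1 where y1: "subgroup A1 G" "char_on G A1 y1" "\<forall>a\<in>D. y1 a = 1" "y1 b1 \<noteq> 1"
    using step_ne1[OF fin D char_on_const1 b(1) nb(1)] unfolding A1_def by blast
  have DA1: "D \<subseteq> A1" "b1 \<in> A1" using ext_set_sup[OF D b(1)] unfolding A1_def by auto
  have b2A1: "b2 \<notin> A1"
  proof
    assume "b2 \<in> A1"
    then obtain a and k :: nat where "a \<in> D" "b2 = a \<otimes> b1 [^] k" unfolding A1_def by (rule ext_set_elim)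
    then have "b2 [^] (1::nat) \<in> D" using A1_back[OF fin D b Ind, of a 1 k] b by simp
    then show False using nb b by simp
  qed
  define A2 where "A2 = ext_set G A1 b2"
  obtain y2 where y2: "subgroup A2 G" "char_on G A2 y2" "\<forall>a\<in>A1. y2 a = y1 a" "y2 b2 \<noteq> 1"
    using step_ne1[OF fin y1(1) y1(2) b(2) b2A1] unfolding A2_def by blast
  have A1A2: "A1 \<subseteq> A2" "b2 \<in> A2" using ext_set_sup[OF y1(1) b(2)] unfolding A2_def by auto
  have b3A2: "b3 \<notin> A2"
  proof
    assume "b3 \<in> A2"
    then obtain a and j :: nat where a: "a \<in> A1" "b3 = a \<otimes> b2 [^] j"
      unfolding A2_def by (rule ext_set_elim)
    obtain e and i :: nat where e: "e \<in> D" "a = e \<otimes> b1 [^] i"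
      using a(1) unfolding A1_def by (rule ext_set_elim)
    have "b3 [^] (1::nat) \<in> D" using A2_back[OF fin D b Ind e(1), of 1 i j] a e b by simp
    then show False using nb b by simp
  qed
  define A3 where "A3 = ext_set G A2 b3"
  obtain y3 where y3: "subgroup A3 G" "char_on G A3 y3" "\<forall>a\<in>A2. y3 a = y2 a" "y3 b3 \<noteq> 1"
    using step_ne1[OF fin y2(1) y2(2) b(3) b3A2] unfolding A3_def by blast
  have A2A3: "A2 \<subseteq> A3" "b3 \<in> A3" using ext_set_sup[OF y2(1) b(3)] unfolding A3_def by auto
  have tA3: "\<tau> \<notin> A3" using t(2) unfolding A3_def A2_def A1_def .
  define A4 where "A4 = ext_set G A3 \<tau>"
  obtain y4 where y4: "subgroup A4 G" "char_on G A4 y4" "\<forall>a\<in>A3. y4 a = y3 a" "y4 \<tau> \<noteq> 1"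
    using step_ne1[OF fin y3(1) y3(2) t(1) tA3] unfolding A4_def by blast
  have A3A4: "A3 \<subseteq> A4" "\<tau> \<in> A4" using ext_set_sup[OF y3(1) t(1)] unfolding A4_def by auto
  obtain x where x: "char_on G (carrier G) x" "\<forall>a\<in>A4. x a = y4 a"
    using ext_full[OF fin y4(1) y4(2)] by blast
  show ?thesis
  proof (intro exI conjI ballI)
    show "char_on G (carrier G) x" by (rule x(1))
    show "x d' = 1" if "d' \<in> D" for d'
    proof -
      have "d' \<in> A1" "d' \<in> A2" "d' \<in> A3" "d' \<in> A4" using that DA1 A1A2 A2A3 A3A4 by auto
      then show ?thesis using that x(2) y4(3) y3(3) y2(3) y1(3) by simp
    qed
    have m1: "b1 \<in> A2" "b1 \<in> A3" "b1 \<in> A4" "b2 \<in> A3" "b2 \<in> A4" "b3 \<in> A4" using DA1 A1A2 A2A3 A3A4 by auto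
    show "x b1 \<noteq> 1" using x(2) y4(3) y3(3) y2(3) y1(4) DA1 m1 by simp
    show "x b2 \<noteq> 1" using x(2) y4(3) y3(3) y2(4) A1A2 m1 by simp
    show "x b3 \<noteq> 1" using x(2) y4(3) y3(4) A2A3 m1 by simp
    show "x \<tau> \<noteq> 1" using x(2) y4(4) A3A4 by simp
  qed
qed

end

context comm_group
begin

lemma sq_rearr:
  assumes "d \<in> carrier G" "u \<in> carrier G" "v \<in> carrier G" "w \<in> carrier G"
  shows "(((d \<otimes> u) \<otimes> v) \<otimes> w) \<otimes> (((d \<otimes> u) \<otimes> v) \<otimes> w) = (d \<otimes> d) \<otimes> ((u \<otimes> u) \<otimes> ((v \<otimes> v) \<otimes> (w \<otimes> w)))"
  using assms by (simp add: m_ac)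

lemma key:
  assumes fin: "finite (carrier G)" and D: "subgroup D G"
    and a: "a1 \<in> carrier G" "a2 \<in> carrier G" "a3 \<in> carrier G"
    and Ind: "\<And>p q r. a1 [^] (p::nat) \<otimes> a2 [^] (q::nat) \<otimes> a3 [^] (r::nat) \<in> D \<Longrightarrow>
                 a1 [^] p \<in> D \<and> a2 [^] q \<in> D \<and> a3 [^] r \<in> D"
    and na: "a1 \<notin> D" "a2 \<notin> D" "a3 \<notin> D"
    and t: "\<tau> \<in> carrier G" "\<tau> \<otimes> \<tau> \<notin> D"
  shows "\<exists>x. char_on G (carrier G) x \<and> (\<forall>d\<in>D. x d = 1) \<and> x a1 \<noteq> 1 \<and> x a2 \<noteq> 1 \<and> x a3 \<noteq> 1 \<and> x \<tau> \<noteq> 1"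
proof (cases "\<tau> \<in> ext_set G (ext_set G (ext_set G D a1) a2) a3")
  case False
  show ?thesis using key_out[OF fin D a Ind na t(1) False] .
next
  case True
  have Dc: "D \<subseteq> carrier G" using D subgroup.subset by blast
  obtain e and r :: nat where e: "e \<in> ext_set G (ext_set G D a1) a2" "\<tau> = e \<otimes> a3 [^] r"
    using True by (rule ext_set_elim)
  obtain f and q :: nat where f: "f \<in> ext_set G D a1" "e = f \<otimes> a2 [^] q"
    using e(1) by (rule ext_set_elim)
  obtain d and p :: nat where d: "d \<in> D" "f = d \<otimes> a1 [^] p"
    using f(1) by (rule ext_set_elim)
  have tau: "\<tau> = ((d \<otimes> a1 [^] p) \<otimes> a2 [^] q) \<otimes> a3 [^] r" using e f d by simp
  have dc: "d \<in> carrier G" using d Dc by auto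
  have sq: "\<tau> \<otimes> \<tau> = (d \<otimes> d) \<otimes> (a1 [^] (2 * p) \<otimes> (a2 [^] (2 * q) \<otimes> a3 [^] (2 * r)))"
  proof -
    have "\<tau> \<otimes> \<tau> = (d \<otimes> d) \<otimes> ((a1 [^] p \<otimes> a1 [^] p) \<otimes> ((a2 [^] q \<otimes> a2 [^] q) \<otimes> (a3 [^] r \<otimes> a3 [^] r)))"
      unfolding tau using dc a by (intro sq_rearr) auto
    also have "\<dots> = (d \<otimes> d) \<otimes> (a1 [^] (2 * p) \<otimes> (a2 [^] (2 * q) \<otimes> a3 [^] (2 * r)))"
      using a by (simp add: nat_pow_mult mult_2)
    finally show ?thesis .
  qed
  have not_all: "\<not> (a1 [^] (2 * p) \<in> D \<and> a2 [^] (2 * q) \<in> D \<and> a3 [^] (2 * r) \<in> D)"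
  proof
    assume H: "a1 [^] (2 * p) \<in> D \<and> a2 [^] (2 * q) \<in> D \<and> a3 [^] (2 * r) \<in> D"
    have "(d \<otimes> d) \<otimes> (a1 [^] (2 * p) \<otimes> (a2 [^] (2 * q) \<otimes> a3 [^] (2 * r))) \<in> D"
      using H d D by (intro subgroup.m_closed) auto
    then show False using sq t(2) by simp
  qed
  show ?thesis
  proof (cases "a3 [^] (2 * r) \<in> D")
    case False
    show ?thesis using key_ord[OF fin D a Ind na(1) na(2) d(1) tau False] .
  next
    case T3: True
    show ?thesis
    proof (cases "a2 [^] (2 * q) \<in> D")
      case False
      have Ind': "\<And>p q r. a1 [^] (p::nat) \<otimes> a3 [^] (q::nat) \<otimes> a2 [^] (r::nat) \<in> D \<Longrightarrow>
                 a1 [^] p \<in> D \<and> a3 [^] q \<in> D \<and> a2 [^] r \<in> D"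
      proof -
        fix p q r :: nat assume "a1 [^] p \<otimes> a3 [^] q \<otimes> a2 [^] r \<in> D"
        moreover have "a1 [^] p \<otimes> a3 [^] q \<otimes> a2 [^] r = a1 [^] p \<otimes> a2 [^] r \<otimes> a3 [^] q"
          using a by (simp add: m_ac)
        ultimately show "a1 [^] p \<in> D \<and> a3 [^] q \<in> D \<and> a2 [^] r \<in> D" using Ind by auto
      qed
      have tau': "\<tau> = ((d \<otimes> a1 [^] p) \<otimes> a3 [^] r) \<otimes> a2 [^] q" unfolding tau using a dc by (simp add: m_ac)
      obtain x where "char_on G (carrier G) x" "\<forall>d\<in>D. x d = 1" "x a1 \<noteq> 1" "x a3 \<noteq> 1" "x a2 \<noteq> 1" "x \<tau> \<noteq> 1"
        using key_ord[OF fin D a(1) a(3) a(2) Ind' na(1) na(3) d(1) tau' False] by blast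
      then show ?thesis by blast
    next
      case T2: True
      then have F: "a1 [^] (2 * p) \<notin> D" using not_all T3 by blast
      have Ind': "\<And>p q r. a2 [^] (p::nat) \<otimes> a3 [^] (q::nat) \<otimes> a1 [^] (r::nat) \<in> D \<Longrightarrow>
                 a2 [^] p \<in> D \<and> a3 [^] q \<in> D \<and> a1 [^] r \<in> D"
      proof -
        fix p q r :: nat assume "a2 [^] p \<otimes> a3 [^] q \<otimes> a1 [^] r \<in> D"
        moreover have "a2 [^] p \<otimes> a3 [^] q \<otimes> a1 [^] r = a1 [^] r \<otimes> a2 [^] p \<otimes> a3 [^] q"
          using a by (simp add: m_ac)
        ultimately show "a2 [^] p \<in> D \<and> a3 [^] q \<in> D \<and> a1 [^] r \<in> D" using Ind by auto
      qed
      have tau': "\<tau> = ((d \<otimes> a2 [^] q) \<otimes> a3 [^] r) \<otimes> a1 [^] p" unfolding tau using a dc by (simp add: m_ac)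
      obtain x where "char_on G (carrier G) x" "\<forall>d\<in>D. x d = 1" "x a2 \<noteq> 1" "x a3 \<noteq> 1" "x a1 \<noteq> 1" "x \<tau> \<noteq> 1"
        using key_ord[OF fin D a(2) a(3) a(1) Ind' na(2) na(3) d(1) tau' F] by blast
      then show ?thesis by blast
    qed
  qed
qed

end

context comm_group
begin

lemma finprod_sq_one:
  assumes sq: "\<And>x. x \<in> carrier G \<Longrightarrow> x \<otimes> x = \<one>" and "A \<subseteq> carrier G"
  shows "finprod G id A \<otimes> finprod G id A = \<one>"
  using assms by (intro sq finprod_closed) auto

lemma finprod_symdiff:
  assumes sq: "\<And>x. x \<in> carrier G \<Longrightarrow> x \<otimes> x = \<one>"
    and A: "A \<subseteq> carrier G" "finite A" and B: "B \<subseteq> carrier G" "finite B"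
  shows "finprod G id A \<otimes> finprod G id B = finprod G id ((A - B) \<union> (B - A))"
proof -
  let ?P = "finprod G id"
  have cl: "\<And>C. C \<subseteq> carrier G \<Longrightarrow> ?P C \<in> carrier G" by (intro finprod_closed) auto
  have eA: "?P A = ?P (A - B) \<otimes> ?P (A \<inter> B)"
  proof -
    have "A = (A - B) \<union> (A \<inter> B)" by auto
    then have "?P A = ?P ((A - B) \<union> (A \<inter> B))" by simp
    also have "\<dots> = ?P (A - B) \<otimes> ?P (A \<inter> B)"
      by (rule finprod_Un_disjoint) (use A in auto)
    finally show ?thesis .
  qed
  have eB: "?P B = ?P (B - A) \<otimes> ?P (A \<inter> B)"
  proof -
    have "B = (B - A) \<union> (A \<inter> B)" by auto
    then have "?P B = ?P ((B - A) \<union> (A \<inter> B))" by simp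
    also have "\<dots> = ?P (B - A) \<otimes> ?P (A \<inter> B)"
      by (rule finprod_Un_disjoint) (use B in auto)
    finally show ?thesis .
  qed
  have eU: "?P ((A - B) \<union> (B - A)) = ?P (A - B) \<otimes> ?P (B - A)"
    by (rule finprod_Un_disjoint) (use A B in auto)
  have c1: "?P (A - B) \<in> carrier G" "?P (B - A) \<in> carrier G" "?P (A \<inter> B) \<in> carrier G"
    using A B by (auto intro: cl)
  have sq1: "?P (A \<inter> B) \<otimes> ?P (A \<inter> B) = \<one>" using A by (intro finprod_sq_one sq) auto
  have "?P A \<otimes> ?P B = (?P (A - B) \<otimes> ?P (B - A)) \<otimes> (?P (A \<inter> B) \<otimes> ?P (A \<inter> B))"
    unfolding eA eB using c1 by (simp add: m_ac)
  also have "\<dots> = ?P (A - B) \<otimes> ?P (B - A)" using sq1 c1 by simp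
  finally show ?thesis using eU by simp
qed

definition spans :: "'a set \<Rightarrow> bool" where
  "spans B \<longleftrightarrow> (\<forall>x\<in>carrier G. \<exists>T\<subseteq>B. x = finprod G id T)"

lemma exists_basis:
  assumes fin: "finite (carrier G)" and sq: "\<And>x. x \<in> carrier G \<Longrightarrow> x \<otimes> x = \<one>"
  shows "\<exists>B. B \<subseteq> carrier G \<and> spans B \<and>
           (\<forall>T T'. T \<subseteq> B \<longrightarrow> T' \<subseteq> B \<longrightarrow> finprod G id T = finprod G id T' \<longrightarrow> T = T')"
proof -
  let ?P = "finprod G id"
  have ex: "\<exists>n B. B \<subseteq> carrier G \<and> spans B \<and> card B = n"
  proof (intro exI conjI)
    show "carrier G \<subseteq> carrier G" by simp
    show "spans (carrier G)" unfolding spans_def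
    proof
      fix x assume "x \<in> carrier G"
      then show "\<exists>T\<subseteq>carrier G. x = ?P T" by (intro exI[of _ "{x}"]) auto
    qed
  qed simp
  define n where "n = (LEAST n. \<exists>B. B \<subseteq> carrier G \<and> spans B \<and> card B = n)"
  obtain B where B: "B \<subseteq> carrier G" "spans B" "card B = n"
    using LeastI_ex[OF ex] unfolding n_def by blast
  have min: "\<And>B'. B' \<subseteq> carrier G \<Longrightarrow> spans B' \<Longrightarrow> n \<le> card B'"
    unfolding n_def by (rule Least_le) blast
  have finB: "finite B" using B(1) fin finite_subset by blast
  have cl: "\<And>C. C \<subseteq> carrier G \<Longrightarrow> ?P C \<in> carrier G" by (intro finprod_closed) auto
  have fs: "\<And>C. C \<subseteq> B \<Longrightarrow> finite C" using finB finite_subset by blast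
  show ?thesis
  proof (intro exI conjI allI impI)
    show "B \<subseteq> carrier G" "spans B" using B by auto
    fix T T' assume T: "T \<subseteq> B" "T' \<subseteq> B" and eq: "?P T = ?P T'"
    show "T = T'"
    proof (rule ccontr)
      assume ne: "T \<noteq> T'"
      define E where "E = (T - T') \<union> (T' - T)"
      have "E \<noteq> {}" using ne unfolding E_def by auto
      then obtain b where b: "b \<in> E" by auto
      have EB: "E \<subseteq> B" using T unfolding E_def by auto
      have "?P E = ?P T \<otimes> ?P T'" unfolding E_def
        using finprod_symdiff[OF sq, of T T'] T B(1) fs by auto
      also have "\<dots> = \<one>" using eq finprod_sq_one[OF sq, of T'] T B(1) by auto
      finally have PE: "?P E = \<one>" .
      define D where "D = E - {b}"
      have ED: "E = insert b D" "b \<notin> D" using b unfolding D_def by auto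
      have bc: "b \<in> carrier G" using b EB B(1) by auto
      have Dc: "D \<subseteq> carrier G" using EB B(1) unfolding D_def by auto
      have finD: "finite D" using fs EB unfolding D_def by auto
      have "?P E = b \<otimes> ?P D" unfolding ED(1) using ED(2) finD bc Dc by (subst finprod_insert) auto
      then have bD: "b \<otimes> ?P D = \<one>" using PE by simp
      have PDc: "?P D \<in> carrier G" using Dc cl by auto
      have bdef: "b = ?P D"
      proof -
        have "b = b \<otimes> (?P D \<otimes> ?P D)" using finprod_sq_one[OF sq Dc] bc by simp
        also have "\<dots> = (b \<otimes> ?P D) \<otimes> ?P D" using bc PDc by (simp add: m_assoc)
        finally show ?thesis using bD PDc by simp
      qed
      have sp: "spans (B - {b})" unfolding spans_def
      proof
        fix x assume x: "x \<in> carrier G"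
        obtain U where U: "U \<subseteq> B" "x = ?P U" using B(2) x unfolding spans_def by blast
        show "\<exists>T\<subseteq>B - {b}. x = ?P T"
        proof (cases "b \<in> U")
          case False then show ?thesis using U by (intro exI[of _ U]) auto
        next
          case True
          have Uc: "U - {b} \<subseteq> carrier G" "finite (U - {b})" using U B(1) fs by auto
          have "x = ?P (insert b (U - {b}))" using U True by (simp add: insert_absorb)
          also have "\<dots> = b \<otimes> ?P (U - {b})" using Uc bc by (subst finprod_insert) auto
          also have "\<dots> = ?P (U - {b}) \<otimes> ?P D" using bdef bc cl[OF Uc(1)] by (simp add: m_comm)
          also have "\<dots> = ?P (((U - {b}) - D) \<union> (D - (U - {b})))"
            using finprod_symdiff[OF sq Uc Dc finD] .
          moreover have "((U - {b}) - D) \<union> (D - (U - {b})) \<subseteq> B - {b}"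
            using U EB unfolding D_def by blast
          ultimately show ?thesis by blast
        qed
      qed
      have "n \<le> card (B - {b})" using min[OF _ sp] B(1) by auto
      moreover have "card (B - {b}) < card B" using b EB finB by (meson card_Diff1_less subsetD)
      ultimately show False using B(3) by simp
    qed
  qed
qed

end

lemma int01: "(x::int) \<in> {0..<2} \<Longrightarrow> x = 0 \<or> x = 1" by auto

lemma exp2_elementary:
  assumes cg: "comm_group Q" and fin: "finite (carrier Q)"
    and sq: "\<And>x. x \<in> carrier Q \<Longrightarrow> x \<otimes>\<^bsub>Q\<^esub> x = \<one>\<^bsub>Q\<^esub>"
  shows "elementary_abelian_2_group Q"
proof -
  interpret Q: comm_group Q by (rule cg)
  let ?P = "finprod Q id"
  obtain B where B: "B \<subseteq> carrier Q" "Q.spans B"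
    and inj: "\<And>T T'. T \<subseteq> B \<Longrightarrow> T' \<subseteq> B \<Longrightarrow> ?P T = ?P T' \<Longrightarrow> T = T'"
    using Q.exists_basis[OF fin sq] by blast
  have finB: "finite B" using B(1) fin finite_subset by blast
  define k where "k = card B"
  obtain e where e: "bij_betw e {..<k} B"
    using ex_bij_betw_nat_finite[OF finB] unfolding k_def lessThan_atLeast0 by blast
  let ?Z = "product_group {..<k} (\<lambda>_. integer_mod_group 2)"
  define S where "S f = {i\<in>{..<k}. f i = (1::int)}" for f
  define \<phi> where "\<phi> f = ?P (e ` S f)" for f
  have eS: "e ` S f \<subseteq> B" for f using e unfolding S_def bij_betw_def by auto
  have fsub: "finite (e ` S f)" for f using eS finB finite_subset by blast
  have injE: "inj_on e {..<k}" using e bij_betw_def by blast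
  have carrZ: "carrier ?Z = (\<Pi>\<^sub>E i\<in>{..<k}. {0..<2::int})" by (simp add: carrier_integer_mod_group)
  have hom: "\<phi> \<in> hom ?Z Q"
  proof (rule homI)
    fix f assume "f \<in> carrier ?Z"
    have "e ` S f \<subseteq> carrier Q" using eS B(1) by blast
    then show "\<phi> f \<in> carrier Q" unfolding \<phi>_def by (intro Q.finprod_closed) (auto simp: image_subset_iff)
  next
    fix f g assume f: "f \<in> carrier ?Z" and g: "g \<in> carrier ?Z"
    have fg: "f \<otimes>\<^bsub>?Z\<^esub> g = (\<lambda>i\<in>{..<k}. (f i + g i) mod 2)" by simp
    have Sfg: "S (f \<otimes>\<^bsub>?Z\<^esub> g) = (S f - S g) \<union> (S g - S f)"
    proof -
      have "\<And>i. i < k \<Longrightarrow> f i \<in> {0..<2} \<and> g i \<in> {0..<2}" using f g unfolding carrZ by (auto simp: PiE_iff)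
      then have v01: "\<And>i. i < k \<Longrightarrow> (f i = 0 \<or> f i = 1) \<and> (g i = 0 \<or> g i = 1)"
        using int01 by blast
      then have pw: "\<And>i. i < k \<Longrightarrow> ((f i + g i) mod 2 = 1) \<longleftrightarrow> ((f i = 1) \<noteq> (g i = 1))"
      proof -
        fix i assume "i < k"
        then have "(f i = 0 \<or> f i = 1) \<and> (g i = 0 \<or> g i = 1)" using v01 by blast
        then show "((f i + g i) mod 2 = 1) \<longleftrightarrow> ((f i = 1) \<noteq> (g i = 1))" by (elim conjE disjE) auto
      qed
      show ?thesis unfolding fg S_def using pw by auto
    qed
    have img: "e ` S (f \<otimes>\<^bsub>?Z\<^esub> g) = (e ` S f - e ` S g) \<union> (e ` S g - e ` S f)"
      unfolding Sfg using injE unfolding S_def by (auto simp: inj_on_def)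
    show "\<phi> (f \<otimes>\<^bsub>?Z\<^esub> g) = \<phi> f \<otimes>\<^bsub>Q\<^esub> \<phi> g"
    proof -
      have "e ` S f \<subseteq> carrier Q" "e ` S g \<subseteq> carrier Q" using eS B(1) by blast+
      then show ?thesis
        unfolding \<phi>_def img using Q.finprod_symdiff[OF sq, of "e ` S f" "e ` S g"] fsub by simp
    qed
  qed
  have bij: "bij_betw \<phi> (carrier ?Z) (carrier Q)"
  proof (rule bij_betw_imageI)
    show "inj_on \<phi> (carrier ?Z)"
    proof
      fix f g assume f: "f \<in> carrier ?Z" and g: "g \<in> carrier ?Z" and eq: "\<phi> f = \<phi> g"
      have "e ` S f = e ` S g" using inj[OF eS eS] eq unfolding \<phi>_def by blast
      moreover have "S f \<subseteq> {..<k}" "S g \<subseteq> {..<k}" unfolding S_def by auto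
      ultimately have SS: "S f = S g" using inj_on_image_eq_iff[OF injE] by blast
      show "f = g"
      proof (rule PiE_ext)
        show "f \<in> (\<Pi>\<^sub>E i\<in>{..<k}. {0..<2::int})" "g \<in> (\<Pi>\<^sub>E i\<in>{..<k}. {0..<2::int})" using f g unfolding carrZ by auto
        fix i assume i: "i \<in> {..<k}"
        have "f i \<in> {0..<2}" "g i \<in> {0..<2}" using f g i unfolding carrZ by (auto simp: PiE_iff)
        moreover have "f i = 1 \<longleftrightarrow> g i = 1" using SS i unfolding S_def by auto
        ultimately show "f i = g i" by auto
      qed
    qed
    show "\<phi> ` carrier ?Z = carrier Q"
    proof
      show "\<phi> ` carrier ?Z \<subseteq> carrier Q" using hom by (auto simp: hom_def)
      show "carrier Q \<subseteq> \<phi> ` carrier ?Z"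
      proof
        fix x assume x: "x \<in> carrier Q"
        obtain T where T: "T \<subseteq> B" "x = ?P T" using B(2) x unfolding Q.spans_def by blast
        define f where "f = (\<lambda>i\<in>{..<k}. if e i \<in> T then 1 else (0::int))"
        have fc: "f \<in> carrier ?Z" unfolding carrZ f_def by auto
        have "e ` S f = T"
        proof
          show "e ` S f \<subseteq> T" unfolding S_def f_def by auto
          show "T \<subseteq> e ` S f"
          proof
            fix t assume "t \<in> T"
            then obtain i where "i \<in> {..<k}" "e i = t" using T e unfolding bij_betw_def by blast
            then show "t \<in> e ` S f" using \<open>t \<in> T\<close> unfolding S_def f_def by auto
          qed
        qed
        then show "x \<in> \<phi> ` carrier ?Z" using fc T unfolding \<phi>_def by auto
      qed
    qed
  qed
  have "\<phi> \<in> iso ?Z Q" using hom bij by (simp add: iso_def)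
  then have "?Z \<cong> Q" unfolding is_iso_def by auto
  moreover have grpZ: "group ?Z" by (rule product_group) simp
  ultimately have "Q \<cong> ?Z" using group.iso_sym by blast
  then show ?thesis unfolding elementary_abelian_2_group_def by blast
qed

lemma pow_DirProd: "(a, b) [^]\<^bsub>G \<times>\<times> H\<^esub> (n::nat) = (a [^]\<^bsub>G\<^esub> n, b [^]\<^bsub>H\<^esub> n)"
  by (induction n) auto

lemma norm1_cnj: assumes "norm (z::complex) = 1" shows "cnj z = inverse z"
proof -
  have "z * cnj z = 1" using complex_norm_square[of z] assms by simp
  then have "inverse z = cnj z" by (rule inverse_unique)
  then show ?thesis by simp
qed

lemma char_mult: "character G chi \<Longrightarrow> x \<in> carrier G \<Longrightarrow> y \<in> carrier G \<Longrightarrow> chi (x \<otimes>\<^bsub>G\<^esub> y) = chi x * chi y"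
  unfolding character_def by blast

context group
begin

lemma char_one: assumes "character G chi" shows "chi \<one> = 1"
proof -
  have "chi (\<one> \<otimes> \<one>) = chi \<one> * chi \<one>" using char_mult[OF assms one_closed one_closed] .
  then have "chi \<one> = chi \<one> * chi \<one>" by simp
  moreover have "chi \<one> \<noteq> 0" using assms unfolding character_def by blast
  ultimately show ?thesis by (metis mult_cancel_left1)
qed

lemma char_pow: assumes "character G chi" "x \<in> carrier G"
  shows "chi (x [^] (n::nat)) = chi x ^ n"
proof (induction n)
  case 0 then show ?case using char_one[OF assms(1)] by simp
next
  case (Suc n)
  have "chi (x [^] n \<otimes> x) = chi (x [^] n) * chi x" using assms unfolding character_def by simp
  then show ?case using Suc by simp
qed

lemma char_norm: assumes "finite (carrier G)" "character G chi" "x \<in> carrier G"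
  shows "norm (chi x) = 1"
proof -
  have o: "Coset.order G > 0" using assms one_closed unfolding Coset.order_def by (auto simp: card_gt_0_iff)
  have "chi x ^ Coset.order G = chi (x [^] Coset.order G)" using char_pow[OF assms(2,3)] by simp
  also have "\<dots> = 1" using pow_order_eq_1[OF assms(3)] char_one[OF assms(2)] by simp
  finally have "norm (chi x) = 1 \<or> Coset.order G = 0" by (rule power_eq_1_iff)
  then show ?thesis using o by simp
qed

lemma char_inv: assumes "character G chi" "x \<in> carrier G"
  shows "chi (inv x) = inverse (chi x)"
proof -
  have "chi (inv x) * chi x = chi (inv x \<otimes> x)" using char_mult[OF assms(1) inv_closed[OF assms(2)] assms(2)] by simp
  also have "\<dots> = 1" using assms char_one[OF assms(1)] by simp
  finally have "chi (inv x) * chi x = 1" .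
  then have "chi x * chi (inv x) = 1" by (simp add: mult.commute)
  then have "inverse (chi x) = chi (inv x)" by (rule inverse_unique)
  then show ?thesis by simp
qed

end

context comm_group
begin

lemma sig_closed:
  assumes K: "subgroup K G" and cad: "curve_action_data G K S"
    and s: "s \<in> S" and k: "k \<in> K"
  shows "k \<otimes> s [^] (p::nat) \<in> S"
proof -
  obtain a b cs gC where cs: "set cs \<subseteq> carrier (G Mod K)"
    and S: "S = {g \<in> carrier G. \<exists>c\<in>set cs. K #> g \<in> generate (G Mod K) {c}}"
    using cad unfolding curve_action_data_def by blast
  have nK: "normal K G" using subgroup_imp_normal[OF K] .
  have cQ: "comm_group (G Mod K)" using abelian_FactGroup[OF K] .
  have sc: "s \<in> carrier G" using s S by auto
  obtain c where c: "c \<in> set cs" "K #> s \<in> generate (G Mod K) {c}" using s S by auto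
  have sgc: "subgroup (generate (G Mod K) {c}) (G Mod K)"
    using group.generate_is_subgroup[OF normal.factorgroup_is_group[OF nK]] c(1) cs by auto
  have "(K #> s) [^]\<^bsub>G Mod K\<^esub> p \<in> generate (G Mod K) {c}"
    using comm_group.sg_pow_closed[OF cQ sgc c(2)] .
  moreover have "(K #> s) [^]\<^bsub>G Mod K\<^esub> p = K #> (s [^] p)" using normal.FactGroup_pow[OF nK sc] by simp
  moreover have "K #> (k \<otimes> s [^] p) = K #> (s [^] p)"
  proof -
    have kc: "k \<in> carrier G" using k K subgroup.subset by blast
    have "K #> (k \<otimes> s [^] p) = (K #> k) #> (s [^] p)"
      using coset_mult_assoc[of K k "s [^] p"] K subgroup.subset kc sc by auto
    also have "\<dots> = K #> (s [^] p)" using coset_join2[OF kc K k] by simp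
    finally show ?thesis .
  qed
  moreover have "k \<otimes> s [^] p \<in> carrier G" using k K subgroup.subset sc by auto
  ultimately show ?thesis using S c(1) by auto
qed

end

lemma adm_chars:
  "admissible G K1 K2 K3 S1 S2 S3 c1 c2 c3 \<Longrightarrow> character G c1 \<and> character G c2 \<and> character G c3"
  unfolding admissible_def admissible1_def admissible2_def pre_admissible_def trivial_char_def by blast

lemma adm_K:
  assumes "admissible G K1 K2 K3 S1 S2 S3 c1 c2 c3"
    "K1 \<subseteq> carrier G" "K2 \<subseteq> carrier G" "K3 \<subseteq> carrier G"
  shows "(\<forall>k\<in>K1. c1 k = 1) \<and> (\<forall>k\<in>K2. c2 k = 1) \<and> (\<forall>k\<in>K3. c3 k = 1)"
  using assms unfolding admissible_def admissible1_def admissible2_def pre_admissible_def trivial_char_def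
  by blast

lemma inv_cancel_complex: "(z::complex) \<noteq> 0 \<Longrightarrow> z * inverse z = 1" by simp

context comm_group
begin

lemma adm_diag:
  assumes fin: "finite (carrier G)" and adm: "admissible G K1 K2 K3 S1 S2 S3 c1 c2 c3" and g: "g \<in> carrier G"
  shows "c1 g * c2 g * c3 g = 1"
proof -
  have ch: "character G c1" "character G c2" "character G c3" using adm_chars[OF adm] by auto
  have n1: "norm (c1 g) = 1" "norm (c2 g) = 1" using char_norm[OF fin ch(1) g] char_norm[OF fin ch(2) g] by auto
  have nz: "c1 g \<noteq> 0" "c2 g \<noteq> 0" using n1 by auto
  consider (A) "admissible1 G K1 K2 K3 S1 S2 S3 c1 c2 c3"
    | (B1) "trivial_char G c1" "\<forall>x\<in>carrier G. c3 x = cnj (c2 x)"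
    | (B2) "trivial_char G c2" "\<forall>x\<in>carrier G. c3 x = cnj (c1 x)"
    | (B3) "trivial_char G c3" "\<forall>x\<in>carrier G. c2 x = cnj (c1 x)"
    using adm unfolding admissible_def admissible2_def by blast
  then show ?thesis
  proof cases
    case A
    then have "c3 g = cnj (c1 g * c2 g)" using g unfolding admissible1_def by blast
    also have "\<dots> = inverse (c1 g * c2 g)" using n1 by (intro norm1_cnj) (simp add: norm_mult)
    finally have c3: "c3 g = inverse (c1 g * c2 g)" .
    have "c1 g * c2 g \<noteq> 0" using nz by simp
    then show ?thesis by (simp only: c3 mult.assoc[symmetric]) (rule right_inverse)
  next
    case B1
    then have "c1 g = 1" "c3 g = inverse (c2 g)" using g n1 norm1_cnj unfolding trivial_char_def by auto
    then show ?thesis using nz by simp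
  next
    case B2
    then have "c2 g = 1" "c3 g = inverse (c1 g)" using g n1 norm1_cnj unfolding trivial_char_def by auto
    then show ?thesis using nz by simp
  next
    case B3
    then have "c3 g = 1" "c2 g = inverse (c1 g)" using g n1 norm1_cnj unfolding trivial_char_def by auto
    then show ?thesis using nz by simp
  qed
qed

lemma KD_mem: "(x, y, z) \<in> K_Delta G K1 K2 K3 \<longleftrightarrow>
   (\<exists>k1 k2 k3 g. k1 \<in> K1 \<and> k2 \<in> K2 \<and> k3 \<in> K3 \<and> g \<in> carrier G \<and> x = k1 \<otimes> g \<and> y = k2 \<otimes> g \<and> z = k3 \<otimes> g)"
  unfolding K_Delta_def by blast

lemma KD_intro: "k1 \<in> K1 \<Longrightarrow> k2 \<in> K2 \<Longrightarrow> k3 \<in> K3 \<Longrightarrow> g \<in> carrier G \<Longrightarrow>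
  (k1 \<otimes> g, k2 \<otimes> g, k3 \<otimes> g) \<in> K_Delta G K1 K2 K3"
  unfolding K_Delta_def by blast

lemma grpP: "group (G \<times>\<times> G \<times>\<times> G)" using DirProd_group[OF is_group DirProd_group[OF is_group is_group]] .

lemma commP: "comm_group (G \<times>\<times> G \<times>\<times> G)"
proof (rule group.group_comm_groupI[OF grpP])
  fix x y assume "x \<in> carrier (G \<times>\<times> G \<times>\<times> G)" "y \<in> carrier (G \<times>\<times> G \<times>\<times> G)"
  then obtain a b c a' b' c' where "x = (a, b, c)" "y = (a', b', c')"
    "a \<in> carrier G" "b \<in> carrier G" "c \<in> carrier G" "a' \<in> carrier G" "b' \<in> carrier G" "c' \<in> carrier G"
    by auto
  then show "x \<otimes>\<^bsub>G \<times>\<times> G \<times>\<times> G\<^esub> y = y \<otimes>\<^bsub>G \<times>\<times> G \<times>\<times> G\<^esub> x" by (simp add: m_comm)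
qed

lemma invP: "a \<in> carrier G \<Longrightarrow> b \<in> carrier G \<Longrightarrow> c \<in> carrier G \<Longrightarrow>
  inv\<^bsub>G \<times>\<times> G \<times>\<times> G\<^esub> (a, b, c) = (inv a, inv b, inv c)"
  using inv_DirProd[OF is_group DirProd_group[OF is_group is_group]] inv_DirProd[OF is_group is_group] by simp

lemma KD_subgroup:
  assumes K: "subgroup K1 G" "subgroup K2 G" "subgroup K3 G"
  shows "subgroup (K_Delta G K1 K2 K3) (G \<times>\<times> G \<times>\<times> G)"
proof (rule group.subgroupI[OF grpP])
  have Kc: "K1 \<subseteq> carrier G" "K2 \<subseteq> carrier G" "K3 \<subseteq> carrier G" using K subgroup.subset by auto
  show "K_Delta G K1 K2 K3 \<subseteq> carrier (G \<times>\<times> G \<times>\<times> G)" unfolding K_Delta_def using Kc by auto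
  have "(\<one> \<otimes> \<one>, \<one> \<otimes> \<one>, \<one> \<otimes> \<one>) \<in> K_Delta G K1 K2 K3"
    using K subgroup.one_closed by (intro KD_intro) auto
  then show "K_Delta G K1 K2 K3 \<noteq> {}" by blast
  fix x assume "x \<in> K_Delta G K1 K2 K3"
  then obtain k1 k2 k3 g where k: "k1 \<in> K1" "k2 \<in> K2" "k3 \<in> K3" "g \<in> carrier G"
    and x: "x = (k1 \<otimes> g, k2 \<otimes> g, k3 \<otimes> g)" unfolding K_Delta_def by blast
  have kc: "k1 \<in> carrier G" "k2 \<in> carrier G" "k3 \<in> carrier G" using k Kc by auto
  have "inv\<^bsub>G \<times>\<times> G \<times>\<times> G\<^esub> x = (inv (k1 \<otimes> g), inv (k2 \<otimes> g), inv (k3 \<otimes> g))"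
    unfolding x using kc k(4) by (intro invP) auto
  also have "\<dots> = (inv k1 \<otimes> inv g, inv k2 \<otimes> inv g, inv k3 \<otimes> inv g)"
    using kc k(4) inv_mult[of k1 g] inv_mult[of k2 g] inv_mult[of k3 g] by simp
  finally have ix: "inv\<^bsub>G \<times>\<times> G \<times>\<times> G\<^esub> x = (inv k1 \<otimes> inv g, inv k2 \<otimes> inv g, inv k3 \<otimes> inv g)" .
  have ik: "inv k1 \<in> K1" "inv k2 \<in> K2" "inv k3 \<in> K3"
    using subgroup.m_inv_closed[OF K(1) k(1)] subgroup.m_inv_closed[OF K(2) k(2)] subgroup.m_inv_closed[OF K(3) k(3)]
    by auto
  have ig: "inv g \<in> carrier G" using k(4) by simp
  show "inv\<^bsub>G \<times>\<times> G \<times>\<times> G\<^esub> x \<in> K_Delta G K1 K2 K3" unfolding ix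
    by (rule KD_intro[OF ik ig])
  fix y assume "y \<in> K_Delta G K1 K2 K3"
  then obtain l1 l2 l3 h where l: "l1 \<in> K1" "l2 \<in> K2" "l3 \<in> K3" "h \<in> carrier G"
    and y: "y = (l1 \<otimes> h, l2 \<otimes> h, l3 \<otimes> h)" unfolding K_Delta_def by blast
  have lc: "l1 \<in> carrier G" "l2 \<in> carrier G" "l3 \<in> carrier G" using l Kc by auto
  have "x \<otimes>\<^bsub>G \<times>\<times> G \<times>\<times> G\<^esub> y = ((k1 \<otimes> l1) \<otimes> (g \<otimes> h), (k2 \<otimes> l2) \<otimes> (g \<otimes> h), (k3 \<otimes> l3) \<otimes> (g \<otimes> h))"
    unfolding x y using kc lc k(4) l(4) swap4[of k1 l1 g h] swap4[of k2 l2 g h] swap4[of k3 l3 g h] by simp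
  moreover have "(k1 \<otimes> l1, k2 \<otimes> l2, k3 \<otimes> l3) \<in> K1 \<times> K2 \<times> K3"
    using subgroup.m_closed[OF K(1) k(1) l(1)] subgroup.m_closed[OF K(2) k(2) l(2)] subgroup.m_closed[OF K(3) k(3) l(3)]
    by auto
  moreover have "g \<otimes> h \<in> carrier G" using k(4) l(4) by simp
  ultimately show "x \<otimes>\<^bsub>G \<times>\<times> G \<times>\<times> G\<^esub> y \<in> K_Delta G K1 K2 K3" using KD_intro by auto
qed

end

context comm_group
begin

lemma GS_mem: "\<tau> \<in> G_sigma G K1 K2 K3 S1 S2 S3 \<sigma>1 \<sigma>2 \<sigma>3 \<longleftrightarrow> \<tau> \<in> carrier (G \<times>\<times> G \<times>\<times> G) \<and>
   (\<forall>c1 c2 c3. admissible G K1 K2 K3 S1 S2 S3 c1 c2 c3 \<and>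
        char_ne_one_at c1 \<sigma>1 \<and> char_ne_one_at c2 \<sigma>2 \<and> char_ne_one_at c3 \<sigma>3 \<longrightarrow>
        c1 (fst \<tau>) * c2 (fst (snd \<tau>)) * c3 (snd (snd \<tau>)) = 1)"
  unfolding G_sigma_def by simp

lemma KD_sub_GS:
  assumes fin: "finite (carrier G)" and K: "subgroup K1 G" "subgroup K2 G" "subgroup K3 G"
  shows "K_Delta G K1 K2 K3 \<subseteq> G_sigma G K1 K2 K3 S1 S2 S3 \<sigma>1 \<sigma>2 \<sigma>3"
proof
  have Kc: "K1 \<subseteq> carrier G" "K2 \<subseteq> carrier G" "K3 \<subseteq> carrier G" using K subgroup.subset by auto
  fix x assume "x \<in> K_Delta G K1 K2 K3"
  then obtain k1 k2 k3 g where k: "k1 \<in> K1" "k2 \<in> K2" "k3 \<in> K3" "g \<in> carrier G"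
    and x: "x = (k1 \<otimes> g, k2 \<otimes> g, k3 \<otimes> g)" unfolding K_Delta_def by blast
  have kc: "k1 \<in> carrier G" "k2 \<in> carrier G" "k3 \<in> carrier G" using k Kc by auto
  show "x \<in> G_sigma G K1 K2 K3 S1 S2 S3 \<sigma>1 \<sigma>2 \<sigma>3" unfolding GS_mem
  proof (intro conjI allI impI)
    show "x \<in> carrier (G \<times>\<times> G \<times>\<times> G)" unfolding x using kc k(4) by simp
    fix c1 c2 c3 assume H: "admissible G K1 K2 K3 S1 S2 S3 c1 c2 c3 \<and>
        char_ne_one_at c1 \<sigma>1 \<and> char_ne_one_at c2 \<sigma>2 \<and> char_ne_one_at c3 \<sigma>3"
    then have adm: "admissible G K1 K2 K3 S1 S2 S3 c1 c2 c3" by blast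
    have ch: "character G c1" "character G c2" "character G c3" using adm_chars[OF adm] by auto
    have tr: "c1 k1 = 1" "c2 k2 = 1" "c3 k3 = 1" using adm_K[OF adm Kc] k by auto
    have "c1 (k1 \<otimes> g) = c1 g" "c2 (k2 \<otimes> g) = c2 g" "c3 (k3 \<otimes> g) = c3 g"
      using char_mult[OF ch(1) kc(1) k(4)] char_mult[OF ch(2) kc(2) k(4)] char_mult[OF ch(3) kc(3) k(4)] tr
      by auto
    then show "c1 (fst x) * c2 (fst (snd x)) * c3 (snd (snd x)) = 1"
      unfolding x using adm_diag[OF fin adm k(4)] by simp
  qed
qed

lemma GS_subgroup:
  assumes fin: "finite (carrier G)" and K: "subgroup K1 G" "subgroup K2 G" "subgroup K3 G"
  shows "subgroup (G_sigma G K1 K2 K3 S1 S2 S3 \<sigma>1 \<sigma>2 \<sigma>3) (G \<times>\<times> G \<times>\<times> G)"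
proof (rule group.subgroupI[OF grpP])
  let ?GS = "G_sigma G K1 K2 K3 S1 S2 S3 \<sigma>1 \<sigma>2 \<sigma>3"
  show "?GS \<subseteq> carrier (G \<times>\<times> G \<times>\<times> G)" unfolding G_sigma_def by blast
  have "K_Delta G K1 K2 K3 \<noteq> {}" using subgroup.one_closed[OF KD_subgroup[OF K]] by blast
  then show "?GS \<noteq> {}" using KD_sub_GS[OF fin K] by blast
  fix x assume x: "x \<in> ?GS"
  then obtain t1 t2 t3 where xt: "x = (t1, t2, t3)" "t1 \<in> carrier G" "t2 \<in> carrier G" "t3 \<in> carrier G"
    unfolding G_sigma_def by auto
  have ix: "inv\<^bsub>G \<times>\<times> G \<times>\<times> G\<^esub> x = (inv t1, inv t2, inv t3)" unfolding xt(1) using xt by (intro invP) auto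
  show "inv\<^bsub>G \<times>\<times> G \<times>\<times> G\<^esub> x \<in> ?GS" unfolding GS_mem ix
  proof (intro conjI allI impI)
    show "(inv t1, inv t2, inv t3) \<in> carrier (G \<times>\<times> G \<times>\<times> G)" using xt by simp
    fix c1 c2 c3 assume H: "admissible G K1 K2 K3 S1 S2 S3 c1 c2 c3 \<and>
        char_ne_one_at c1 \<sigma>1 \<and> char_ne_one_at c2 \<sigma>2 \<and> char_ne_one_at c3 \<sigma>3"
    have ch: "character G c1" "character G c2" "character G c3" using adm_chars H by blast+
    have p1: "c1 t1 * c2 t2 * c3 t3 = 1" using x H unfolding GS_mem xt(1) by auto
    have iv: "c1 (inv t1) = inverse (c1 t1)" "c2 (inv t2) = inverse (c2 t2)" "c3 (inv t3) = inverse (c3 t3)"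
      using char_inv[OF ch(1) xt(2)] char_inv[OF ch(2) xt(3)] char_inv[OF ch(3) xt(4)] by auto
    have "inverse (c1 t1) * inverse (c2 t2) * inverse (c3 t3) = inverse (c1 t1 * c2 t2 * c3 t3)" by simp
    then show "c1 (fst (inv t1, inv t2, inv t3)) * c2 (fst (snd (inv t1, inv t2, inv t3))) *
        c3 (snd (snd (inv t1, inv t2, inv t3))) = 1" using p1 iv by simp
  qed
  fix y assume y: "y \<in> ?GS"
  then obtain u1 u2 u3 where yu: "y = (u1, u2, u3)" "u1 \<in> carrier G" "u2 \<in> carrier G" "u3 \<in> carrier G"
    unfolding G_sigma_def by auto
  show "x \<otimes>\<^bsub>G \<times>\<times> G \<times>\<times> G\<^esub> y \<in> ?GS" unfolding GS_mem
  proof (intro conjI allI impI)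
    show "x \<otimes>\<^bsub>G \<times>\<times> G \<times>\<times> G\<^esub> y \<in> carrier (G \<times>\<times> G \<times>\<times> G)" using xt yu by simp
    fix c1 c2 c3 assume H: "admissible G K1 K2 K3 S1 S2 S3 c1 c2 c3 \<and>
        char_ne_one_at c1 \<sigma>1 \<and> char_ne_one_at c2 \<sigma>2 \<and> char_ne_one_at c3 \<sigma>3"
    have ch: "character G c1" "character G c2" "character G c3" using adm_chars H by blast+
    have p1: "c1 t1 * c2 t2 * c3 t3 = 1" using x H unfolding GS_mem xt(1) by auto
    have p2: "c1 u1 * c2 u2 * c3 u3 = 1" using y H unfolding GS_mem yu(1) by auto
    have "c1 (t1 \<otimes> u1) = c1 t1 * c1 u1" "c2 (t2 \<otimes> u2) = c2 t2 * c2 u2" "c3 (t3 \<otimes> u3) = c3 t3 * c3 u3"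
      using char_mult[OF ch(1) xt(2) yu(2)] char_mult[OF ch(2) xt(3) yu(3)] char_mult[OF ch(3) xt(4) yu(4)] by auto
    then have "c1 (t1 \<otimes> u1) * c2 (t2 \<otimes> u2) * c3 (t3 \<otimes> u3) = (c1 t1 * c2 t2 * c3 t3) * (c1 u1 * c2 u2 * c3 u3)"
      by (simp add: ac_simps)
    then show "c1 (fst (x \<otimes>\<^bsub>G \<times>\<times> G \<times>\<times> G\<^esub> y)) * c2 (fst (snd (x \<otimes>\<^bsub>G \<times>\<times> G \<times>\<times> G\<^esub> y))) *
        c3 (snd (snd (x \<otimes>\<^bsub>G \<times>\<times> G \<times>\<times> G\<^esub> y))) = 1"
      using p1 p2 unfolding xt(1) yu(1) by simp
  qed
qed

end

context comm_group
begin

lemma sq_in_KD: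
  assumes fin: "finite (carrier G)"
    and K: "subgroup K1 G" "subgroup K2 G" "subgroup K3 G"
    and cad: "curve_action_data G K1 S1" "curve_action_data G K2 S2" "curve_action_data G K3 S3"
    and free: "S1 \<inter> S2 \<inter> S3 = {\<one>}"
    and s1: "\<sigma>1 \<in> carrier (G Mod K1)" "\<sigma>1 \<noteq> \<one>\<^bsub>G Mod K1\<^esub>" "\<sigma>1 \<subseteq> S1"
    and s2: "\<sigma>2 \<in> carrier (G Mod K2)" "\<sigma>2 \<noteq> \<one>\<^bsub>G Mod K2\<^esub>" "\<sigma>2 \<subseteq> S2"
    and s3: "\<sigma>3 \<in> carrier (G Mod K3)" "\<sigma>3 \<noteq> \<one>\<^bsub>G Mod K3\<^esub>" "\<sigma>3 \<subseteq> S3"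
    and tau: "\<tau> \<in> G_sigma G K1 K2 K3 S1 S2 S3 \<sigma>1 \<sigma>2 \<sigma>3"
  shows "\<tau> \<otimes>\<^bsub>G \<times>\<times> G \<times>\<times> G\<^esub> \<tau> \<in> K_Delta G K1 K2 K3"
proof (rule ccontr)
  assume ntt: "\<tau> \<otimes>\<^bsub>G \<times>\<times> G \<times>\<times> G\<^esub> \<tau> \<notin> K_Delta G K1 K2 K3"
  let ?P = "G \<times>\<times> G \<times>\<times> G"
  let ?KD = "K_Delta G K1 K2 K3"
  have Kc: "K1 \<subseteq> carrier G" "K2 \<subseteq> carrier G" "K3 \<subseteq> carrier G" using K subgroup.subset by auto
  have KDs: "subgroup ?KD ?P" using KD_subgroup[OF K] .
  have finP: "finite (carrier ?P)" using fin by simp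
  obtain x1 where x1: "x1 \<in> carrier G" "\<sigma>1 = K1 #> x1" using s1(1) unfolding carrier_FactGroup by blast
  obtain x2 where x2: "x2 \<in> carrier G" "\<sigma>2 = K2 #> x2" using s2(1) unfolding carrier_FactGroup by blast
  obtain x3 where x3: "x3 \<in> carrier G" "\<sigma>3 = K3 #> x3" using s3(1) unfolding carrier_FactGroup by blast
  have xs: "x1 \<in> \<sigma>1" "x2 \<in> \<sigma>2" "x3 \<in> \<sigma>3" using rcos_self x1 x2 x3 K by auto
  have xS: "x1 \<in> S1" "x2 \<in> S2" "x3 \<in> S3" using xs s1(3) s2(3) s3(3) by auto
  have xK: "x1 \<notin> K1" "x2 \<notin> K2" "x3 \<notin> K3"
  proof -
    show "x1 \<notin> K1" using coset_join2[OF x1(1) K(1)] x1(2) s1(2) by auto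
    show "x2 \<notin> K2" using coset_join2[OF x2(1) K(2)] x2(2) s2(2) by auto
    show "x3 \<notin> K3" using coset_join2[OF x3(1) K(3)] x3(2) s3(2) by auto
  qed
  have geo: "x1 [^] p \<in> K1 \<and> x2 [^] q \<in> K2 \<and> x3 [^] r \<in> K3"
    if H: "(x1 [^] (p::nat), x2 [^] (q::nat), x3 [^] (r::nat)) \<in> ?KD" for p q r
  proof -
    obtain k1 k2 k3 g where k: "k1 \<in> K1" "k2 \<in> K2" "k3 \<in> K3" "g \<in> carrier G"
      and e: "x1 [^] p = k1 \<otimes> g" "x2 [^] q = k2 \<otimes> g" "x3 [^] r = k3 \<otimes> g"
      using H unfolding KD_mem by blast
    have kc: "k1 \<in> carrier G" "k2 \<in> carrier G" "k3 \<in> carrier G" using k Kc by auto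
    have ge: "g = inv k1 \<otimes> x1 [^] p" "g = inv k2 \<otimes> x2 [^] q" "g = inv k3 \<otimes> x3 [^] r"
      using e kc k(4) by (simp_all add: m_assoc[symmetric])
    have ik: "inv k1 \<in> K1" "inv k2 \<in> K2" "inv k3 \<in> K3"
      using subgroup.m_inv_closed[OF K(1) k(1)] subgroup.m_inv_closed[OF K(2) k(2)] subgroup.m_inv_closed[OF K(3) k(3)]
      by auto
    have "g \<in> S1" "g \<in> S2" "g \<in> S3"
      using sig_closed[OF K(1) cad(1) xS(1) ik(1), of p] sig_closed[OF K(2) cad(2) xS(2) ik(2), of q]
        sig_closed[OF K(3) cad(3) xS(3) ik(3), of r] ge by auto
    then have "g = \<one>" using free by blast
    then show ?thesis using e k kc by simp
  qed
  define a1 where "a1 = (x1, \<one>, \<one>)"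
  define a2 where "a2 = (\<one>, x2, \<one>)"
  define a3 where "a3 = (\<one>, \<one>, x3)"
  have ac: "a1 \<in> carrier ?P" "a2 \<in> carrier ?P" "a3 \<in> carrier ?P" unfolding a1_def a2_def a3_def using x1 x2 x3 by auto
  have apow: "a1 [^]\<^bsub>?P\<^esub> (n::nat) = (x1 [^] n, \<one>, \<one>)" "a2 [^]\<^bsub>?P\<^esub> n = (\<one>, x2 [^] n, \<one>)"
      "a3 [^]\<^bsub>?P\<^esub> n = (\<one>, \<one>, x3 [^] n)" for n
    unfolding a1_def a2_def a3_def by (simp_all add: pow_DirProd)
  have Ind: "a1 [^]\<^bsub>?P\<^esub> p \<in> ?KD \<and> a2 [^]\<^bsub>?P\<^esub> q \<in> ?KD \<and> a3 [^]\<^bsub>?P\<^esub> r \<in> ?KD"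
    if H: "a1 [^]\<^bsub>?P\<^esub> (p::nat) \<otimes>\<^bsub>?P\<^esub> a2 [^]\<^bsub>?P\<^esub> (q::nat) \<otimes>\<^bsub>?P\<^esub> a3 [^]\<^bsub>?P\<^esub> (r::nat) \<in> ?KD" for p q r
  proof -
    have "(x1 [^] p, x2 [^] q, x3 [^] r) \<in> ?KD" using H x1 x2 x3 unfolding apow by simp
    then have g: "x1 [^] p \<in> K1" "x2 [^] q \<in> K2" "x3 [^] r \<in> K3" using geo by auto
    have o: "\<one> \<in> K1" "\<one> \<in> K2" "\<one> \<in> K3" using K subgroup.one_closed by auto
    have "(x1 [^] p \<otimes> \<one>, \<one> \<otimes> \<one>, \<one> \<otimes> \<one>) \<in> ?KD" using KD_intro[OF g(1) o(2) o(3) one_closed] .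
    moreover have "(\<one> \<otimes> \<one>, x2 [^] q \<otimes> \<one>, \<one> \<otimes> \<one>) \<in> ?KD" using KD_intro[OF o(1) g(2) o(3) one_closed] .
    moreover have "(\<one> \<otimes> \<one>, \<one> \<otimes> \<one>, x3 [^] r \<otimes> \<one>) \<in> ?KD" using KD_intro[OF o(1) o(2) g(3) one_closed] .
    ultimately show ?thesis unfolding apow using x1 x2 x3 by simp
  qed
  have na: "a1 \<notin> ?KD" "a2 \<notin> ?KD" "a3 \<notin> ?KD"
  proof -
    show "a1 \<notin> ?KD" using geo[of 1 0 0] xK x1 unfolding a1_def by auto
    show "a2 \<notin> ?KD" using geo[of 0 1 0] xK x2 unfolding a2_def by auto
    show "a3 \<notin> ?KD" using geo[of 0 0 1] xK x3 unfolding a3_def by auto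
  qed
  have tc: "\<tau> \<in> carrier ?P" using tau unfolding GS_mem by blast
  obtain x where x: "char_on ?P (carrier ?P) x" "\<forall>d\<in>?KD. x d = 1" "x a1 \<noteq> 1" "x a2 \<noteq> 1" "x a3 \<noteq> 1" "x \<tau> \<noteq> 1"
    using comm_group.key[OF commP finP KDs ac Ind na tc ntt] by blast
  have xnz: "\<And>u. u \<in> carrier ?P \<Longrightarrow> x u \<noteq> 0" and xm: "\<And>u v. u \<in> carrier ?P \<Longrightarrow> v \<in> carrier ?P \<Longrightarrow> x (u \<otimes>\<^bsub>?P\<^esub> v) = x u * x v"
    using x(1) unfolding char_on_def by auto
  define c1 where "c1 g = x (g, \<one>, \<one>)" for g
  define c2 where "c2 g = x (\<one>, g, \<one>)" for g
  define c3 where "c3 g = x (\<one>, \<one>, g)" for g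
  have ch: "character G c1" "character G c2" "character G c3"
  proof -
    show "character G c1" unfolding character_def c1_def
    proof (intro conjI ballI)
      fix g h assume "g \<in> carrier G" "h \<in> carrier G"
      then show "x (g \<otimes> h, \<one>, \<one>) = x (g, \<one>, \<one>) * x (h, \<one>, \<one>)" using xm[of "(g, \<one>, \<one>)" "(h, \<one>, \<one>)"] by simp
    qed (use xnz in simp)
    show "character G c2" unfolding character_def c2_def
    proof (intro conjI ballI)
      fix g h assume "g \<in> carrier G" "h \<in> carrier G"
      then show "x (\<one>, g \<otimes> h, \<one>) = x (\<one>, g, \<one>) * x (\<one>, h, \<one>)" using xm[of "(\<one>, g, \<one>)" "(\<one>, h, \<one>)"] by simp
    qed (use xnz in simp)
    show "character G c3" unfolding character_def c3_def
    proof (intro conjI ballI)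
      fix g h assume "g \<in> carrier G" "h \<in> carrier G"
      then show "x (\<one>, \<one>, g \<otimes> h) = x (\<one>, \<one>, g) * x (\<one>, \<one>, h)" using xm[of "(\<one>, \<one>, g)" "(\<one>, \<one>, h)"] by simp
    qed (use xnz in simp)
  qed
  have o: "\<one> \<in> K1" "\<one> \<in> K2" "\<one> \<in> K3" using K subgroup.one_closed by auto
  have trK: "\<forall>k\<in>K1. c1 k = 1" "\<forall>k\<in>K2. c2 k = 1" "\<forall>k\<in>K3. c3 k = 1"
  proof -
    show "\<forall>k\<in>K1. c1 k = 1"
    proof
      fix k assume k: "k \<in> K1"
      have "(k \<otimes> \<one>, \<one> \<otimes> \<one>, \<one> \<otimes> \<one>) \<in> ?KD" using KD_intro[OF k o(2) o(3) one_closed] .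
      then show "c1 k = 1" using x(2) k Kc unfolding c1_def by auto
    qed
    show "\<forall>k\<in>K2. c2 k = 1"
    proof
      fix k assume k: "k \<in> K2"
      have "(\<one> \<otimes> \<one>, k \<otimes> \<one>, \<one> \<otimes> \<one>) \<in> ?KD" using KD_intro[OF o(1) k o(3) one_closed] .
      then show "c2 k = 1" using x(2) k Kc unfolding c2_def by auto
    qed
    show "\<forall>k\<in>K3. c3 k = 1"
    proof
      fix k assume k: "k \<in> K3"
      have "(\<one> \<otimes> \<one>, \<one> \<otimes> \<one>, k \<otimes> \<one>) \<in> ?KD" using KD_intro[OF o(1) o(2) k one_closed] .
      then show "c3 k = 1" using x(2) k Kc unfolding c3_def by auto
    qed
  qed
  have prod3: "x (u1, u2, u3) = c1 u1 * c2 u2 * c3 u3"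
    if u: "u1 \<in> carrier G" "u2 \<in> carrier G" "u3 \<in> carrier G" for u1 u2 u3
  proof -
    have "(u1, u2, u3) = ((u1, \<one>, \<one>) \<otimes>\<^bsub>?P\<^esub> (\<one>, u2, \<one>)) \<otimes>\<^bsub>?P\<^esub> (\<one>, \<one>, u3)" using u by simp
    then have "x (u1, u2, u3) = x ((u1, \<one>, \<one>) \<otimes>\<^bsub>?P\<^esub> (\<one>, u2, \<one>)) * x (\<one>, \<one>, u3)"
      using xm[of "(u1, \<one>, \<one>) \<otimes>\<^bsub>?P\<^esub> (\<one>, u2, \<one>)" "(\<one>, \<one>, u3)"] u by simp
    also have "\<dots> = x (u1, \<one>, \<one>) * x (\<one>, u2, \<one>) * x (\<one>, \<one>, u3)"
      using xm[of "(u1, \<one>, \<one>)" "(\<one>, u2, \<one>)"] u by simp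
    finally show ?thesis unfolding c1_def c2_def c3_def .
  qed
  have c3cnj: "\<forall>g\<in>carrier G. c3 g = cnj (c1 g * c2 g)"
  proof
    fix g assume g: "g \<in> carrier G"
    have "(\<one> \<otimes> g, \<one> \<otimes> g, \<one> \<otimes> g) \<in> ?KD" using KD_intro[OF o g] .
    then have "x (g, g, g) = 1" using x(2) g by simp
    then have "(c1 g * c2 g) * c3 g = 1" using prod3[OF g g g] by simp
    then have I: "inverse (c1 g * c2 g) = c3 g" by (rule inverse_unique)
    have N: "norm (c1 g * c2 g) = 1" using char_norm[OF fin ch(1) g] char_norm[OF fin ch(2) g]
      by (simp add: norm_mult)
    have C: "cnj (c1 g * c2 g) = inverse (c1 g * c2 g)" by (rule norm1_cnj[OF N])
    show "c3 g = cnj (c1 g * c2 g)" by (simp only: C I)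
  qed
  have ne: "char_ne_one_at c1 \<sigma>1" "char_ne_one_at c2 \<sigma>2" "char_ne_one_at c3 \<sigma>3"
  proof -
    show "char_ne_one_at c1 \<sigma>1" unfolding char_ne_one_at_def
    proof
      fix y assume "y \<in> \<sigma>1"
      then obtain h where h: "h \<in> K1" "y = h \<otimes> x1" unfolding x1(2) r_coset_def by blast
      have "c1 y = c1 h * c1 x1" using char_mult[OF ch(1)] h Kc x1 by auto
      then show "c1 y \<noteq> 1" using trK(1) h x(3) unfolding a1_def c1_def by simp
    qed
    show "char_ne_one_at c2 \<sigma>2" unfolding char_ne_one_at_def
    proof
      fix y assume "y \<in> \<sigma>2"
      then obtain h where h: "h \<in> K2" "y = h \<otimes> x2" unfolding x2(2) r_coset_def by blast
      have "c2 y = c2 h * c2 x2" using char_mult[OF ch(2)] h Kc x2 by auto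
      then show "c2 y \<noteq> 1" using trK(2) h x(4) unfolding a2_def c2_def by simp
    qed
    show "char_ne_one_at c3 \<sigma>3" unfolding char_ne_one_at_def
    proof
      fix y assume "y \<in> \<sigma>3"
      then obtain h where h: "h \<in> K3" "y = h \<otimes> x3" unfolding x3(2) r_coset_def by blast
      have "c3 y = c3 h * c3 x3" using char_mult[OF ch(3)] h Kc x3 by auto
      then show "c3 y \<noteq> 1" using trK(3) h x(5) unfolding a3_def c3_def by simp
    qed
  qed
  have pa: "pre_admissible G K1 S1 c1" "pre_admissible G K2 S2 c2" "pre_admissible G K3 S3 c3"
    unfolding pre_admissible_def using ch trK xS ne xs unfolding char_ne_one_at_def by blast+
  have adm: "admissible G K1 K2 K3 S1 S2 S3 c1 c2 c3"
    unfolding admissible_def admissible1_def using pa c3cnj by blast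
  obtain t1 t2 t3 where t: "\<tau> = (t1, t2, t3)" by (cases \<tau>) auto
  have tcs: "t1 \<in> carrier G" "t2 \<in> carrier G" "t3 \<in> carrier G" using tc t by auto
  have "c1 t1 * c2 t2 * c3 t3 = 1" using tau adm ne unfolding GS_mem t by auto
  then have "x \<tau> = 1" using prod3[OF tcs] t by simp
  then show False using x(6) by simp
qed

end

lemma (in comm_group) commP_comm:
  "x \<in> carrier (G \<times>\<times> G \<times>\<times> G) \<Longrightarrow> y \<in> carrier (G \<times>\<times> G \<times>\<times> G) \<Longrightarrow>
   x \<otimes>\<^bsub>G \<times>\<times> G \<times>\<times> G\<^esub> y = y \<otimes>\<^bsub>G \<times>\<times> G \<times>\<times> G\<^esub> x"
  using comm_monoid.m_comm[of "G \<times>\<times> G \<times>\<times> G"] commP unfolding comm_group_def by blast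

theorem proposition4p11:
  fixes G :: "('a, 'b) monoid_scheme"
    and K1 K2 K3 S1 S2 S3 :: "'a set"
    and \<sigma>1 \<sigma>2 \<sigma>3 :: "'a set"
  assumes "comm_group G" and "finite (carrier G)"
    and "subgroup K1 G" and "subgroup K2 G" and "subgroup K3 G"
    and "cyclic_group (G\<lparr>carrier := K1\<rparr>)" and "cyclic_group (G\<lparr>carrier := K2\<rparr>)"
    and "cyclic_group (G\<lparr>carrier := K3\<rparr>)"
    and "K1 \<inter> K2 = {\<one>\<^bsub>G\<^esub>}" and "K1 \<inter> K3 = {\<one>\<^bsub>G\<^esub>}" and "K2 \<inter> K3 = {\<one>\<^bsub>G\<^esub>}"
    and "curve_action_data G K1 S1" and "curve_action_data G K2 S2"
    and "curve_action_data G K3 S3"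
    and "S1 \<inter> S2 \<inter> S3 = {\<one>\<^bsub>G\<^esub>}"
    and "\<sigma>1 \<in> carrier (G Mod K1)" and "\<sigma>1 \<noteq> \<one>\<^bsub>G Mod K1\<^esub>" and "\<sigma>1 \<subseteq> S1"
    and "\<sigma>2 \<in> carrier (G Mod K2)" and "\<sigma>2 \<noteq> \<one>\<^bsub>G Mod K2\<^esub>" and "\<sigma>2 \<subseteq> S2"
    and "\<sigma>3 \<in> carrier (G Mod K3)" and "\<sigma>3 \<noteq> \<one>\<^bsub>G Mod K3\<^esub>" and "\<sigma>3 \<subseteq> S3"
  shows "trivial_group
           (((G \<times>\<times> G \<times>\<times> G)\<lparr>carrier := G_sigma G K1 K2 K3 S1 S2 S3 \<sigma>1 \<sigma>2 \<sigma>3\<rparr>) Mod K_Delta G K1 K2 K3)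
       \<or> elementary_abelian_2_group
           (((G \<times>\<times> G \<times>\<times> G)\<lparr>carrier := G_sigma G K1 K2 K3 S1 S2 S3 \<sigma>1 \<sigma>2 \<sigma>3\<rparr>) Mod K_Delta G K1 K2 K3)"
proof -
  interpret G: comm_group G by fact
  let ?P = "G \<times>\<times> G \<times>\<times> G"
  let ?GS = "G_sigma G K1 K2 K3 S1 S2 S3 \<sigma>1 \<sigma>2 \<sigma>3"
  let ?KD = "K_Delta G K1 K2 K3"
  let ?PS = "?P\<lparr>carrier := ?GS\<rparr>"
  have fin: "finite (carrier G)" by fact
  have K: "subgroup K1 G" "subgroup K2 G" "subgroup K3 G" by fact+
  have GSs: "subgroup ?GS ?P" using G.GS_subgroup[OF fin K] .
  have KDs: "subgroup ?KD ?P" using G.KD_subgroup[OF K] .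
  have KDGS: "?KD \<subseteq> ?GS" using G.KD_sub_GS[OF fin K] .
  have grpPS: "group ?PS" using group.subgroup_imp_group[OF G.grpP GSs] .
  have cPS: "comm_group ?PS"
  proof (rule group.group_comm_groupI[OF grpPS])
    fix x y assume "x \<in> carrier ?PS" "y \<in> carrier ?PS"
    moreover have "?GS \<subseteq> carrier ?P" using subgroup.subset[OF GSs] .
    ultimately have "x \<in> carrier ?P" "y \<in> carrier ?P" by auto
    then show "x \<otimes>\<^bsub>?PS\<^esub> y = y \<otimes>\<^bsub>?PS\<^esub> x" using G.commP_comm by simp
  qed
  have KDsub: "subgroup ?KD ?PS" using group.subgroup_incl[OF G.grpP KDs GSs KDGS] .
  have nKD: "normal ?KD ?PS" using comm_group.subgroup_imp_normal[OF cPS KDsub] .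
  have cQ: "comm_group (?PS Mod ?KD)" using comm_group.abelian_FactGroup[OF cPS KDsub] .
  have finGS: "finite ?GS" using finite_subset[OF subgroup.subset[OF GSs]] fin by simp
  have finQ: "finite (carrier (?PS Mod ?KD))" unfolding carrier_FactGroup using finGS by simp
  have sq: "monoid.mult (?PS Mod ?KD) Z Z = one (?PS Mod ?KD)" if HZ: "Z \<in> carrier (?PS Mod ?KD)" for Z
  proof -
    obtain t where t: "t \<in> ?GS" "Z = r_coset ?PS ?KD t" using HZ unfolding carrier_FactGroup by auto
    have tt: "monoid.mult ?P t t \<in> ?KD"
      using G.sq_in_KD[OF fin K assms(12,13,14,15,16,17,18,19,20,21,22,23,24) t(1)] .
    have tc: "t \<in> carrier ?PS" using t(1) by simp
    have m: "monoid.mult ?PS t t = monoid.mult ?P t t" by simp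
    have tt': "monoid.mult ?PS t t \<in> ?KD" using tt m by simp
    have ttc: "monoid.mult ?PS t t \<in> carrier ?PS" using tt' KDGS by auto
    have "monoid.mult (?PS Mod ?KD) Z Z = set_mult ?PS Z Z" by simp
    also have "\<dots> = r_coset ?PS ?KD (monoid.mult ?PS t t)"
      unfolding t(2) by (rule normal.rcos_sum[OF nKD tc tc])
    also have "\<dots> = ?KD" by (rule group.coset_join2[OF grpPS ttc KDsub tt'])
    finally show ?thesis by simp
  qed
  have "elementary_abelian_2_group (?PS Mod ?KD)" using exp2_elementary[OF cQ finQ sq] by blast
  then show ?thesis by blast
qed

end
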